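(* Let $T>0$, $d\in\mathbb{N}$, and let $\mathcal{X}$ be the set of continuous piecewise linear paths $[0,T]\to\mathbb{R}^d$. For $X,Y\in\mathcal{X}$ and $s,t\in[0,T]$ set $$U(s,t) = k\big(X|_{[0,s]},\,Y|_{[0,t]}\big),\qquad \widetilde U(s,t) = k\big(\overleftarrow{X}|_{[0,s]},\,\overleftarrow{Y}|_{[0,t]}\big),$$ where $\overleftarrow{X}_r = X_{T-r}$ and $\overleftarrow{Y}_r=Y_{T-r}$ for $r\in[0,T]$ are the paths reversed in time. Then for every $\gamma\in\mathcal{X}$ the directional derivative of the signature kernel along $\gamma$ satisfies $$k_\gamma(X,Y) = \int_0^{T}\int_0^{T} U(s,t)\,\widetilde U(T-s,T-t)\,\big(\dot{\gamma}_s^{T}\dot{Y}_t\big)\,ds\,dt .$$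
   Context: For a continuous path $Z:[a,b]\to\mathbb{R}^d$ of bounded variation with coordinates $Z=(Z^{(1)},\dots,Z^{(d)})$, and a multi-index (word) $\boldsymbol\alpha=(\alpha_1,\dots,\alpha_j)$ with $\alpha_i\in\{1,\dots,d\}$, the signature coordinate is the iterated integral $S(Z)^{\boldsymbol\alpha}=\int_{a<s_1<\dots<s_j<b} dZ^{(\alpha_1)}_{s_1}\cdots dZ^{(\alpha_j)}_{s_j}$, with $S(Z)^{\emptyset}=1$ for the empty word ($j=0$). The signature kernel of two such paths $Z,W$ is $k(Z,W)=\sum_{j=0}^\infty\sum_{|\boldsymbol\alpha|=j} S(Z)^{\boldsymbol\alpha}S(W)^{\boldsymbol\alpha}$ (the inner sum over all words of length $j$). For a path restricted to $[0,s]$ the signature is taken over $[0,s]$. The directional derivative of $k$ along a path $\gamma$ is $k_\gamma(X,Y)=\frac{\partial}{\partial\epsilon}k(X+\epsilon\gamma,Y)\big|_{\epsilon=0}$. Dots denote time derivatives (defined almost everywhere for piecewise linear paths). *)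

theory Defs
  imports "HOL-Analysis.Analysis"
begin

text \<open>Continuous piecewise linear paths on [0,T]: there is a partition
  0 = p_0 < p_1 < ... < p_n = T such that the path is affine on each [p_k, p_(k+1)].
  (Affine pieces on closed intervals force continuity on [0,T].)\<close>
definition pw_linear :: "real \<Rightarrow> (real \<Rightarrow> real^'d) \<Rightarrow> bool" where
  "pw_linear T Z \<longleftrightarrow>
     (\<exists>p::real list. p \<noteq> [] \<and> hd p = 0 \<and> last p = T \<and> sorted_wrt (<) p \<and>
        (\<forall>k < length p - 1. \<exists>a b. \<forall>t\<in>{p!k..p!(Suc k)}. Z t = a + t *\<^sub>R b))"

text \<open>Time derivative of the path (defined almost everywhere for piecewise linear paths).\<close>
definition dot :: "(real \<Rightarrow> real^'d) \<Rightarrow> real \<Rightarrow> real^'d" where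
  "dot Z s = vector_derivative Z (at s)"

text \<open>Signature coordinate S(Z|_[a,b])^w as an iterated integral, integrating out the first
  time variable s_1 first:
  S^{(i) w}_{[a,b]} = \<integral>_a^b Zdot^(i)_s S^w_{[s,b]} ds,  S^{()} = 1.\<close>
fun sig :: "(real \<Rightarrow> real^'d) \<Rightarrow> real \<Rightarrow> real \<Rightarrow> 'd list \<Rightarrow> real" where
  "sig Z a b [] = 1"
| "sig Z a b (i # w) = integral {a..b} (\<lambda>s. (dot Z s $ i) * sig Z s b w)"

definition sigker :: "(real \<Rightarrow> real^'d) \<Rightarrow> real \<Rightarrow> real \<Rightarrow> (real \<Rightarrow> real^'d) \<Rightarrow> real \<Rightarrow> real \<Rightarrow> real" where
  "sigker Z a b W c e =
     (\<Sum>j. \<Sum>w\<in>{w::'d list. length w = j}. sig Z a b w * sig W c e w)"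

definition rev_path :: "real \<Rightarrow> (real \<Rightarrow> real^'d) \<Rightarrow> real \<Rightarrow> real^'d" where
  "rev_path T Z r = Z (T - r)"

end

theory Submission
  imports Defs
begin


lemma set_int_bdd:
  fixes \<psi> :: "real \<Rightarrow> real"
  assumes [measurable]: "\<psi> \<in> borel_measurable borel" and "\<And>s. s \<in> {a..b} \<Longrightarrow> \<bar>\<psi> s\<bar> \<le> B"
  shows "set_integrable lborel {a..b} \<psi>"
  unfolding set_integrable_def
  by (rule integrableI_bounded_set_indicator[where B=B]) (use assms emeasure_bounded_finite[of "{a..b}"] in auto)

lemma int_bdd:
  fixes \<psi> :: "real \<Rightarrow> real"
  assumes "\<psi> \<in> borel_measurable borel" and "\<And>s. s \<in> {a..b} \<Longrightarrow> \<bar>\<psi> s\<bar> \<le> B"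
  shows "\<psi> integrable_on {a..b}"
  using set_borel_integral_eq_integral(1)[OF set_int_bdd[OF assms]] .

lemma cont_meas2:
  fixes K :: "real \<Rightarrow> real \<Rightarrow> real"
  assumes "continuous_on UNIV (\<lambda>p. K (fst p) (snd p))"
  shows "(\<lambda>p. K (fst p) (snd p)) \<in> borel_measurable (lborel \<Otimes>\<^sub>M lborel)"
proof -
  have "(\<lambda>p. K (fst p) (snd p)) \<in> borel_measurable borel"
    using assms by (rule borel_measurable_continuous_onI)
  then show ?thesis
    by (simp add: borel_prod[symmetric] measurable_cong_sets[OF sets_pair_measure_cong[OF sets_lborel sets_lborel] refl])
qed

lemma cont_bound2:
  fixes K :: "real \<Rightarrow> real \<Rightarrow> real"
  assumes "continuous_on UNIV (\<lambda>p. K (fst p) (snd p))"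
  obtains C where "\<And>r s. r \<in> {a..b} \<Longrightarrow> s \<in> {a..b} \<Longrightarrow> \<bar>K r s\<bar> \<le> C"
proof -
  have "compact ((\<lambda>p. K (fst p) (snd p)) ` ({a..b} \<times> {a..b}))"
    by (rule compact_continuous_image[OF continuous_on_subset[OF assms]]) (auto intro: compact_Times)
  then obtain C where "\<forall>x\<in>(\<lambda>p. K (fst p) (snd p)) ` ({a..b} \<times> {a..b}). \<bar>x\<bar> \<le> C"
    using compact_imp_bounded bounded_real by metis
  then show ?thesis using that by force
qed

lemma FT_both:
  fixes \<phi> \<psi> :: "real \<Rightarrow> real" and K :: "real \<Rightarrow> real \<Rightarrow> real"
  assumes [measurable]: "\<phi> \<in> borel_measurable borel" "\<psi> \<in> borel_measurable borel"
    and b\<phi>: "\<And>t. t \<in> {a..b} \<Longrightarrow> \<bar>\<phi> t\<bar> \<le> A" and b\<psi>: "\<And>t. t \<in> {a..b} \<Longrightarrow> \<bar>\<psi> t\<bar> \<le> B"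
    and cK: "continuous_on UNIV (\<lambda>p. K (fst p) (snd p))"
  shows "(\<lambda>r. \<phi> r * integral {r..b} (\<lambda>s. K r s * \<psi> s)) integrable_on {a..b} \<and>
       integral {a..b} (\<lambda>r. \<phi> r * integral {r..b} (\<lambda>s. K r s * \<psi> s))
       = integral {a..b} (\<lambda>s. integral {a..s} (\<lambda>r. \<phi> r * K r s) * \<psi> s)"
proof -
  have Km[measurable]: "(\<lambda>p. K (fst p) (snd p)) \<in> borel_measurable (lborel \<Otimes>\<^sub>M lborel)"
    by (rule cont_meas2[OF cK])
  have Km1[measurable]: "(\<lambda>s. K r s) \<in> borel_measurable borel" for r
    by (rule borel_measurable_continuous_onI)
      (rule continuous_on_compose2[OF cK, of _ "\<lambda>s. (r, s)", simplified], auto intro!: continuous_intros)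
  have Km2[measurable]: "(\<lambda>r. K r s) \<in> borel_measurable borel" for s
    by (rule borel_measurable_continuous_onI)
      (rule continuous_on_compose2[OF cK, of _ "\<lambda>r. (r, s)", simplified], auto intro!: continuous_intros)
  obtain C where C: "\<And>r s. r \<in> {a..b} \<Longrightarrow> s \<in> {a..b} \<Longrightarrow> \<bar>K r s\<bar> \<le> C"
    using cont_bound2[OF cK] by blast
  have A0: "0 \<le> A" if "a \<le> b" using b\<phi>[of a] that by force
  have C0: "0 \<le> C" if "a \<le> b" using C[of a a] that by force
  define Tri where "Tri = {p::real\<times>real. a \<le> fst p} \<inter> {p. fst p \<le> snd p} \<inter> {p. snd p \<le> b}"
  have Tri_sets[measurable]: "Tri \<in> sets (lborel \<Otimes>\<^sub>M lborel)"
    unfolding Tri_def lborel_prod by (intro sets.Int) (auto intro!: borel_closed closed_Collect_le continuous_intros)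
  define F where "F r s = indicator Tri (r,s) * (\<phi> r * K r s * \<psi> s)" for r s
  have int: "integrable (lborel \<Otimes>\<^sub>M lborel) (case_prod F)"
  proof (rule integrableI_bounded_set[where A=Tri and B="A*C*B"])
    show "case_prod F \<in> borel_measurable (lborel \<Otimes>\<^sub>M lborel)"
      unfolding F_def by measurable
    have "Tri \<subseteq> cbox (a,a) (b,b)" unfolding Tri_def by (auto simp: cbox_Pair_eq)
    then have "bounded Tri" using bounded_cbox bounded_subset by blast
    then show "emeasure (lborel \<Otimes>\<^sub>M lborel) Tri < \<infinity>"
      unfolding lborel_prod by (rule emeasure_bounded_finite)
    show "AE x in lborel \<Otimes>\<^sub>M lborel. x \<in> Tri \<longrightarrow> norm (case_prod F x) \<le> A * C * B"
    proof (intro AE_I2 impI)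
      fix x :: "real \<times> real" assume x: "x \<in> Tri"
      obtain r s where xrs: "x = (r,s)" by fastforce
      have "r \<in> {a..b}" "s \<in> {a..b}" using x xrs unfolding Tri_def by auto
      then have "\<bar>\<phi> r * K r s * \<psi> s\<bar> \<le> A * C * B"
        unfolding abs_mult by (intro mult_mono C b\<phi> b\<psi>) (auto intro!: mult_nonneg_nonneg A0 intro: order_trans[OF abs_ge_zero C])
      then show "norm (case_prod F x) \<le> A * C * B" using x xrs unfolding F_def by simp
    qed
    show "AE x in lborel \<Otimes>\<^sub>M lborel. x \<notin> Tri \<longrightarrow> case_prod F x = 0"
      unfolding F_def by auto
  qed (rule Tri_sets)
  have inner1: "(\<integral>s. F r s \<partial>lborel) = indicator {a..b} r * (\<phi> r * integral {r..b} (\<lambda>s. K r s * \<psi> s))" for r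
  proof (cases "r \<in> {a..b}")
    case True
    have "F r s = \<phi> r * (indicator {r..b} s *\<^sub>R (K r s * \<psi> s))" for s
      using True unfolding F_def Tri_def by (auto simp: indicator_def)
    then have "(\<integral>s. F r s \<partial>lborel) = \<phi> r * (LINT s:{r..b}|lborel. K r s * \<psi> s)"
      by (simp add: set_lebesgue_integral_def)
    also have "(LINT s:{r..b}|lborel. K r s * \<psi> s) = integral {r..b} (\<lambda>s. K r s * \<psi> s)"
    proof (rule set_borel_integral_eq_integral(2), rule set_int_bdd[where B="C*B"])
      fix s assume "s \<in> {r..b}"
      then show "\<bar>K r s * \<psi> s\<bar> \<le> C * B" using True
        unfolding abs_mult by (intro mult_mono C b\<psi>) (auto intro: C0)
    qed measurable
    finally show ?thesis using True by simp
  next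
    case False
    then have "F r s = 0" for s unfolding F_def Tri_def by auto
    then show ?thesis using False by simp
  qed
  have inner2: "(\<integral>r. F r s \<partial>lborel) = indicator {a..b} s * (integral {a..s} (\<lambda>r. \<phi> r * K r s) * \<psi> s)" for s
  proof (cases "s \<in> {a..b}")
    case True
    have "F r s = (indicator {a..s} r *\<^sub>R (\<phi> r * K r s)) * \<psi> s" for r
      using True unfolding F_def Tri_def by (auto simp: indicator_def)
    then have "(\<integral>r. F r s \<partial>lborel) = (LINT r:{a..s}|lborel. \<phi> r * K r s) * \<psi> s"
      by (simp add: set_lebesgue_integral_def)
    also have "(LINT r:{a..s}|lborel. \<phi> r * K r s) = integral {a..s} (\<lambda>r. \<phi> r * K r s)"
    proof (rule set_borel_integral_eq_integral(2), rule set_int_bdd[where B="A*C"])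
      fix r assume "r \<in> {a..s}"
      then show "\<bar>\<phi> r * K r s\<bar> \<le> A * C" using True
        unfolding abs_mult by (intro mult_mono C b\<phi>) (auto intro: A0)
    qed measurable
    finally show ?thesis using True by simp
  next
    case False
    then have "F r s = 0" for r unfolding F_def Tri_def by auto
    then show ?thesis using False by simp
  qed
  have i1: "integrable lborel (\<lambda>r. \<integral>s. F r s \<partial>lborel)"
    using lborel_pair.integrable_fst[OF int] .
  have i2: "integrable lborel (\<lambda>s. \<integral>r. F r s \<partial>lborel)"
    using lborel_pair.integrable_snd[OF int] .
  have si1: "set_integrable lborel {a..b} (\<lambda>r. \<phi> r * integral {r..b} (\<lambda>s. K r s * \<psi> s))"
    using i1 by (simp add: inner1 set_integrable_def)
  have "integral {a..b} (\<lambda>r. \<phi> r * integral {r..b} (\<lambda>s. K r s * \<psi> s))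
      = (LINT r:{a..b}|lborel. \<phi> r * integral {r..b} (\<lambda>s. K r s * \<psi> s))"
    by (rule set_borel_integral_eq_integral(2)[symmetric, OF si1])
  also have "\<dots> = (\<integral>r. \<integral>s. F r s \<partial>lborel \<partial>lborel)"
    by (simp add: inner1 set_lebesgue_integral_def)
  also have "\<dots> = (\<integral>s. \<integral>r. F r s \<partial>lborel \<partial>lborel)"
    using lborel_pair.Fubini_integral[OF int] by simp
  also have "\<dots> = (LINT s:{a..b}|lborel. integral {a..s} (\<lambda>r. \<phi> r * K r s) * \<psi> s)"
    by (simp add: inner2 set_lebesgue_integral_def)
  also have "\<dots> = integral {a..b} (\<lambda>s. integral {a..s} (\<lambda>r. \<phi> r * K r s) * \<psi> s)"
    by (rule set_borel_integral_eq_integral(2))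
       (use i2 in \<open>simp add: inner2 set_integrable_def\<close>)
  finally show ?thesis using set_borel_integral_eq_integral(1)[OF si1] by blast
qed

lemmas FT = FT_both[THEN conjunct2]
lemmas FT_int = FT_both[THEN conjunct1]



fun sg :: "(real \<Rightarrow> real^'d) \<Rightarrow> real \<Rightarrow> real \<Rightarrow> 'd list \<Rightarrow> real" where
  "sg f a b [] = 1"
| "sg f a b (i # w) = integral {a..b} (\<lambda>s. f s $ i * sg f s b w)"

lemma sig_sg: "sig Z a b w = sg (dot Z) a b w"
  by (induction w arbitrary: a) simp_all

definition good :: "real \<Rightarrow> (real \<Rightarrow> real^'d) \<Rightarrow> bool" where
  "good M f \<longleftrightarrow> (\<forall>i. (\<lambda>t. f t $ i) \<in> borel_measurable borel) \<and> (\<forall>t i. \<bar>f t $ i\<bar> \<le> M)"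

lemma good_meas: "good M f \<Longrightarrow> (\<lambda>t. f t $ i) \<in> borel_measurable borel"
  by (simp add: good_def)

lemma good_bnd: "good M f \<Longrightarrow> \<bar>f t $ i\<bar> \<le> M"
  by (simp add: good_def)

lemma good_M0: "good M f \<Longrightarrow> 0 \<le> M"
  using good_bnd[of M f 0 undefined] by linarith

lemma int_bound_K:
  fixes h :: "real \<Rightarrow> real"
  assumes "h integrable_on {a..b}" "\<And>s. s \<in> {a..b} \<Longrightarrow> \<bar>h s\<bar> \<le> K"
  shows "\<bar>integral {a..b} h\<bar> \<le> K * max 0 (b - a)"
proof (cases "a \<le> b")
  case True
  have "norm (integral {a..b} h) \<le> integral {a..b} (\<lambda>_. K)"
    by (rule integral_norm_bound_integral) (use assms in auto)
  then show ?thesis using True by (simp add: mult.commute)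
next
  case False
  then show ?thesis by simp
qed

lemma intdiff:
  fixes h :: "real \<Rightarrow> real"
  assumes h: "h integrable_on {c..e}" and hK: "\<And>s. s \<in> {c..e} \<Longrightarrow> \<bar>h s\<bar> \<le> K"
    and ab: "a \<in> {c..e}" "b \<in> {c..e}" "a' \<in> {c..e}" "b' \<in> {c..e}"
  shows "\<bar>integral {a..b} h - integral {a'..b'} h\<bar> \<le> K * (\<bar>a - a'\<bar> + \<bar>b - b'\<bar>)"
proof -
  define H where "H x = integral {c..x} h" for x
  have I: "integral {x..y} h = H y - H x" if "x \<in> {c..e}" "y \<in> {c..e}" "x \<le> y" for x y
  proof -
    have "h integrable_on {c..y}" using h that by (auto intro: integrable_subinterval_real)
    then show ?thesis using Henstock_Kurzweil_Integration.integral_combine[of c x y h] that unfolding H_def by auto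
  qed
  have bnd: "\<bar>integral {x..y} h\<bar> \<le> K * max 0 (y - x)" if "x \<in> {c..e}" "y \<in> {c..e}" for x y
    by (rule int_bound_K) (use that h hK in \<open>auto intro: integrable_subinterval_real\<close>)
  have K0: "0 \<le> K" using hK[of a] ab by auto
  have HH: "\<bar>H x - H y\<bar> \<le> K * \<bar>x - y\<bar>" if "x \<in> {c..e}" "y \<in> {c..e}" for x y
  proof (cases "x \<le> y")
    case True
    then show ?thesis using I[OF that(1,2) True] bnd[OF that(1,2)] by (simp add: abs_minus_commute)
  next
    case False
    then show ?thesis using I[OF that(2,1)] bnd[OF that(2,1)] by simp
  qed
  show ?thesis
  proof (cases "a \<le> b")
    case ab1: True
    show ?thesis
    proof (cases "a' \<le> b'")
      case True
      have "\<bar>integral {a..b} h - integral {a'..b'} h\<bar> = \<bar>(H b - H b') - (H a - H a')\<bar>"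
        using I[OF ab(1,2) ab1] I[OF ab(3,4) True] by simp
      also have "\<dots> \<le> \<bar>H b - H b'\<bar> + \<bar>H a - H a'\<bar>" by linarith
      also have "\<dots> \<le> K * \<bar>b - b'\<bar> + K * \<bar>a - a'\<bar>" using HH ab by (meson add_mono)
      finally show ?thesis by (simp add: algebra_simps)
    next
      case False
      have "\<bar>integral {a..b} h - integral {a'..b'} h\<bar> \<le> K * max 0 (b - a)" using bnd[OF ab(1,2)] False by simp
      also have "\<dots> \<le> K * (\<bar>a - a'\<bar> + \<bar>b - b'\<bar>)" using False K0 by (intro mult_left_mono) auto
      finally show ?thesis .
    qed
  next
    case False
    have "\<bar>integral {a..b} h - integral {a'..b'} h\<bar> \<le> K * max 0 (b' - a')" using bnd[OF ab(3,4)] False by simp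
    also have "\<dots> \<le> K * (\<bar>a - a'\<bar> + \<bar>b - b'\<bar>)" using False K0 by (intro mult_left_mono) auto
    finally show ?thesis .
  qed
qed

lemma lip_cont:
  fixes F :: "real \<Rightarrow> real \<Rightarrow> real"
  assumes "\<And>c e. \<exists>L. \<forall>a\<in>{c..e}. \<forall>b\<in>{c..e}. \<forall>a'\<in>{c..e}. \<forall>b'\<in>{c..e}.
              \<bar>F a b - F a' b'\<bar> \<le> L * (\<bar>a - a'\<bar> + \<bar>b - b'\<bar>)"
  shows "continuous_on UNIV (\<lambda>p. F (fst p) (snd p))"
  unfolding continuous_on_iff
proof (intro ballI allI impI)
  fix p :: "real \<times> real" and \<epsilon> :: real assume "\<epsilon> > 0"
  obtain a0 b0 where p: "p = (a0, b0)" by fastforce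
  define c where "c = min a0 b0 - 1"
  define e where "e = max a0 b0 + 1"
  obtain L where L: "\<forall>a\<in>{c..e}. \<forall>b\<in>{c..e}. \<forall>a'\<in>{c..e}. \<forall>b'\<in>{c..e}.
              \<bar>F a b - F a' b'\<bar> \<le> L * (\<bar>a - a'\<bar> + \<bar>b - b'\<bar>)" using assms by blast
  define L' where "L' = \<bar>L\<bar> + 1"
  have L'0: "L' > 0" unfolding L'_def by simp
  define d where "d = min 1 (\<epsilon> / (2 * L'))"
  have d0: "d > 0" using \<open>\<epsilon> > 0\<close> L'0 unfolding d_def by simp
  show "\<exists>d>0. \<forall>x'\<in>UNIV. dist x' p < d \<longrightarrow> dist (F (fst x') (snd x')) (F (fst p) (snd p)) < \<epsilon>"
  proof (intro exI[of _ d] conjI ballI impI d0)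
    fix q :: "real \<times> real" assume "dist q p < d"
    obtain a b where q: "q = (a, b)" by fastforce
    have da: "\<bar>a - a0\<bar> < d" using dist_fst_le[of q p] \<open>dist q p < d\<close> p q by (simp add: dist_real_def)
    have db: "\<bar>b - b0\<bar> < d" using dist_snd_le[of q p] \<open>dist q p < d\<close> p q by (simp add: dist_real_def)
    have d1: "d \<le> 1" unfolding d_def by simp
    have box: "a \<in> {c..e}" "b \<in> {c..e}" "a0 \<in> {c..e}" "b0 \<in> {c..e}"
      using da db d1 unfolding c_def e_def by auto
    have "\<bar>F a b - F a0 b0\<bar> \<le> L * (\<bar>a - a0\<bar> + \<bar>b - b0\<bar>)" using L box by blast
    also have "\<dots> \<le> L' * (\<bar>a - a0\<bar> + \<bar>b - b0\<bar>)" unfolding L'_def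
      by (intro mult_right_mono) auto
    also have "\<dots> < L' * (2 * d)" using da db L'0 by (intro mult_strict_left_mono) auto
    also have "\<dots> \<le> \<epsilon>" using L'0 unfolding d_def
      by (simp add: field_simps min_def)
    finally show "dist (F (fst q) (snd q)) (F (fst p) (snd p)) < \<epsilon>"
      using p q by (simp add: dist_real_def)
  qed
qed

lemma int_mc:
  fixes \<phi> g :: "real \<Rightarrow> real"
  assumes [measurable]: "\<phi> \<in> borel_measurable borel" and b: "\<And>t. \<bar>\<phi> t\<bar> \<le> M"
    and g: "continuous_on UNIV g"
  shows "(\<lambda>s. \<phi> s * g s) integrable_on {x..y}"
proof -
  have [measurable]: "g \<in> borel_measurable borel" using g by (rule borel_measurable_continuous_onI)
  have "compact (g ` {x..y})" by (rule compact_continuous_image[OF continuous_on_subset[OF g]]) auto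
  then obtain B where B: "\<forall>z\<in>g ` {x..y}. \<bar>z\<bar> \<le> B" using compact_imp_bounded bounded_real by metis
  show ?thesis
  proof (rule int_bdd[where B="M*B"])
    fix s assume "s \<in> {x..y}"
    then show "\<bar>\<phi> s * g s\<bar> \<le> M * B" unfolding abs_mult using B b
      by (intro mult_mono) (auto intro: order_trans[OF abs_ge_zero b])
  qed measurable
qed

lemma sg_lip:
  assumes f: "good M f"
  shows "\<exists>L. \<forall>a\<in>{c..e}. \<forall>b\<in>{c..e}. \<forall>a'\<in>{c..e}. \<forall>b'\<in>{c..e}.
              \<bar>sg f a b w - sg f a' b' w\<bar> \<le> L * (\<bar>a - a'\<bar> + \<bar>b - b'\<bar>)"
proof (induction w arbitrary: c e)
  case Nil
  then show ?case by (intro exI[of _ 0]) simp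
next
  case (Cons i w)
  have M0: "0 \<le> M" using good_M0[OF f] .
  have cont: "continuous_on UNIV (\<lambda>p. sg f (fst p) (snd p) w)"
    by (rule lip_cont) (rule Cons.IH)
  have cont1: "continuous_on UNIV (\<lambda>s. sg f s b w)" for b
    by (rule continuous_on_compose2[OF cont, of _ "\<lambda>s. (s, b)", simplified]) (auto intro!: continuous_intros)
  obtain L where L: "\<forall>a\<in>{c..e}. \<forall>b\<in>{c..e}. \<forall>a'\<in>{c..e}. \<forall>b'\<in>{c..e}.
              \<bar>sg f a b w - sg f a' b' w\<bar> \<le> L * (\<bar>a - a'\<bar> + \<bar>b - b'\<bar>)" using Cons.IH by blast
  have L0: "0 \<le> \<bar>L\<bar>" by simp
  have LL: "L * x \<le> \<bar>L\<bar> * x" if "0 \<le> x" for x using that by (intro mult_right_mono) auto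
  obtain B where B: "\<And>r s. r \<in> {c..e} \<Longrightarrow> s \<in> {c..e} \<Longrightarrow> \<bar>sg f r s w\<bar> \<le> B"
    using cont_bound2[OF cont] by blast
  have intg: "(\<lambda>s. f s $ i * sg f s b w) integrable_on {x..y}" for b x y
    by (rule int_mc[OF good_meas[OF f] good_bnd[OF f] cont1])
  show ?case
  proof (intro exI[of _ "M * \<bar>L\<bar> * (e - c) + M * B"] ballI)
    fix a b a' b' assume box: "a \<in> {c..e}" "b \<in> {c..e}" "a' \<in> {c..e}" "b' \<in> {c..e}"
    have t1: "\<bar>integral {a..b} (\<lambda>s. f s $ i * sg f s b w) - integral {a..b} (\<lambda>s. f s $ i * sg f s b' w)\<bar>
        \<le> M * \<bar>L\<bar> * (e - c) * \<bar>b - b'\<bar>"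
    proof -
      have "integral {a..b} (\<lambda>s. f s $ i * sg f s b w) - integral {a..b} (\<lambda>s. f s $ i * sg f s b' w)
          = integral {a..b} (\<lambda>s. f s $ i * (sg f s b w - sg f s b' w))"
        by (subst integral_diff[symmetric]) (auto intro!: intg simp: algebra_simps)
      also have "\<bar>\<dots>\<bar> \<le> (M * (\<bar>L\<bar> * \<bar>b - b'\<bar>)) * max 0 (b - a)"
      proof (rule int_bound_K)
        show "(\<lambda>s. f s $ i * (sg f s b w - sg f s b' w)) integrable_on {a..b}"
          by (rule int_mc[OF good_meas[OF f] good_bnd[OF f]]) (intro continuous_intros cont1)
        fix s assume s: "s \<in> {a..b}"
        then have "s \<in> {c..e}" using box by auto
        then have "\<bar>sg f s b w - sg f s b' w\<bar> \<le> L * \<bar>b - b'\<bar>" using L box by fastforce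
        then have "\<bar>sg f s b w - sg f s b' w\<bar> \<le> \<bar>L\<bar> * \<bar>b - b'\<bar>" using LL[of "\<bar>b - b'\<bar>"] by linarith
        then show "\<bar>f s $ i * (sg f s b w - sg f s b' w)\<bar> \<le> M * (\<bar>L\<bar> * \<bar>b - b'\<bar>)"
          unfolding abs_mult by (intro mult_mono good_bnd[OF f] M0) auto
      qed
      also have "\<dots> \<le> (M * (\<bar>L\<bar> * \<bar>b - b'\<bar>)) * (e - c)"
        using box M0 L0 by (intro mult_left_mono) auto
      finally show ?thesis by (simp add: algebra_simps)
    qed
    have t2: "\<bar>integral {a..b} (\<lambda>s. f s $ i * sg f s b' w) - integral {a'..b'} (\<lambda>s. f s $ i * sg f s b' w)\<bar>
        \<le> (M * B) * (\<bar>a - a'\<bar> + \<bar>b - b'\<bar>)"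
    proof (rule intdiff[OF intg _ box])
      fix s assume "s \<in> {c..e}"
      then show "\<bar>f s $ i * sg f s b' w\<bar> \<le> M * B" unfolding abs_mult
        using box by (intro mult_mono good_bnd[OF f] B M0) auto
    qed
    have "\<bar>sg f a b (i # w) - sg f a' b' (i # w)\<bar> \<le> M * \<bar>L\<bar> * (e - c) * \<bar>b - b'\<bar> + (M * B) * (\<bar>a - a'\<bar> + \<bar>b - b'\<bar>)"
      using t1 t2 by (simp only: sg.simps) arith
    also have "\<dots> \<le> (M * \<bar>L\<bar> * (e - c) + M * B) * (\<bar>a - a'\<bar> + \<bar>b - b'\<bar>)"
    proof -
      have nn: "0 \<le> M * \<bar>L\<bar> * (e - c) * \<bar>a - a'\<bar>" using box M0 by (intro mult_nonneg_nonneg) auto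
      have eq: "(M * \<bar>L\<bar> * (e - c) + M * B) * (\<bar>a - a'\<bar> + \<bar>b - b'\<bar>) =
         M * \<bar>L\<bar> * (e - c) * \<bar>a - a'\<bar> + M * \<bar>L\<bar> * (e - c) * \<bar>b - b'\<bar> + (M * B) * (\<bar>a - a'\<bar> + \<bar>b - b'\<bar>)"
        by (simp add: algebra_simps)
      show ?thesis unfolding eq using nn by linarith
    qed
    finally show "\<bar>sg f a b (i # w) - sg f a' b' (i # w)\<bar> \<le> (M * \<bar>L\<bar> * (e - c) + M * B) * (\<bar>a - a'\<bar> + \<bar>b - b'\<bar>)" .
  qed
qed

lemma sg_cont: "good M f \<Longrightarrow> continuous_on UNIV (\<lambda>p. sg f (fst p) (snd p) w)"
  by (rule lip_cont) (rule sg_lip)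

lemma sg_cont1: "good M f \<Longrightarrow> continuous_on UNIV (\<lambda>s. sg f s b w)"
  by (rule continuous_on_compose2[OF sg_cont, of _ _ _ "\<lambda>s. (s, b)", simplified]) (auto intro!: continuous_intros)

lemma sg_cont2: "good M f \<Longrightarrow> continuous_on UNIV (\<lambda>s. sg f a s w)"
  by (rule continuous_on_compose2[OF sg_cont, of _ _ _ "\<lambda>s. (a, s)", simplified]) (auto intro!: continuous_intros)

lemma sg_meas1: "good M f \<Longrightarrow> (\<lambda>s. sg f s b w) \<in> borel_measurable borel"
  by (rule borel_measurable_continuous_onI) (rule sg_cont1)

lemma sg_meas2: "good M f \<Longrightarrow> (\<lambda>s. sg f a s w) \<in> borel_measurable borel"
  by (rule borel_measurable_continuous_onI) (rule sg_cont2)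



lemma sg_bdd_on:
  assumes f: "good M f"
  obtains B where "\<And>s. s \<in> {x..y} \<Longrightarrow> \<bar>sg f s b w\<bar> \<le> B"
proof -
  have "compact ((\<lambda>s. sg f s b w) ` {x..y})"
    by (rule compact_continuous_image[OF continuous_on_subset[OF sg_cont1[OF f]]]) auto
  then obtain B where B: "\<forall>z\<in>(\<lambda>s. sg f s b w) ` {x..y}. \<bar>z\<bar> \<le> B" using compact_imp_bounded bounded_real by metis
  show ?thesis by (rule that[of B]) (use B in auto)
qed

lemma chen:
  assumes f: "good M f"
  shows "sg f a b (u @ i # v) = integral {a..b} (\<lambda>s. sg f a s u * f s $ i * sg f s b v)"
proof (induction u arbitrary: a)
  case Nil
  then show ?case by simp
next
  case (Cons j u)
  have M0: "0 \<le> M" using good_M0[OF f] .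
  obtain B where B: "\<And>s. s \<in> {a..b} \<Longrightarrow> \<bar>sg f s b v\<bar> \<le> B" using sg_bdd_on[OF f] by blast
  have "sg f a b ((j # u) @ i # v) = integral {a..b} (\<lambda>r. f r $ j * integral {r..b} (\<lambda>s. sg f r s u * (f s $ i * sg f s b v)))"
    by (simp add: Cons.IH mult.assoc)
  also have "\<dots> = integral {a..b} (\<lambda>s. integral {a..s} (\<lambda>r. f r $ j * sg f r s u) * (f s $ i * sg f s b v))"
  proof (rule FT[where A=M and B="M*B"])
    show "(\<lambda>r. f r $ j) \<in> borel_measurable borel" using good_meas[OF f] .
    show "(\<lambda>s. f s $ i * sg f s b v) \<in> borel_measurable borel"
      using good_meas[OF f] sg_meas1[OF f] by measurable
    show "continuous_on UNIV (\<lambda>p. sg f (fst p) (snd p) u)" by (rule sg_cont[OF f])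
    show "\<bar>f t $ j\<bar> \<le> M" for t using good_bnd[OF f] .
    show "\<bar>f t $ i * sg f t b v\<bar> \<le> M * B" if "t \<in> {a..b}" for t
      unfolding abs_mult using that by (intro mult_mono good_bnd[OF f] B M0) auto
  qed
  also have "\<dots> = integral {a..b} (\<lambda>s. sg f a s (j # u) * f s $ i * sg f s b v)"
    by (simp add: mult.assoc)
  finally show ?case .
qed

lemma chen_last:
  assumes f: "good M f"
  shows "sg f a b (u @ [i]) = integral {a..b} (\<lambda>s. sg f a s u * f s $ i)"
  using chen[OF f, of a b u i "[]"] by simp

lemma int_refl: "integral {a..b} (\<lambda>r. H (T - r)) = integral {T-b..T-a} (H::real\<Rightarrow>real)"
proof -
  have "integral {a..b} (\<lambda>r. H (T - r)) = integral {-b..-a} (\<lambda>x. H (T - - x))"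
    using Henstock_Kurzweil_Integration.integral_reflect_real[where f="\<lambda>r. H (T - r)" and a=a and b=b] by simp
  also have "\<dots> = integral {-b..-a} (H \<circ> (+) T)" by (simp add: o_def)
  also have "\<dots> = integral {-b+T..-a+T} H" by (rule integral_shift_Icc_real)
  finally show ?thesis by (simp add: algebra_simps)
qed

lemma good_rev:
  assumes f: "good M f"
  shows "good M (\<lambda>r. - f (T - r))"
  unfolding good_def
proof (intro conjI allI)
  fix i
  have "(\<lambda>t. T - t) \<in> borel_measurable borel" by measurable
  then have "(\<lambda>t. f (T - t) $ i) \<in> borel_measurable borel"
    using measurable_compose[OF _ good_meas[OF f]] by blast
  then show "(\<lambda>t. (- f (T - t)) $ i) \<in> borel_measurable borel" by simp
  fix t show "\<bar>(- f (T - t)) $ i\<bar> \<le> M" using good_bnd[OF f] by simp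
qed

lemma sg_rev:
  assumes f: "good M f"
  shows "sg (\<lambda>r. - f (T - r)) a b w = (-1) ^ length w * sg f (T - b) (T - a) (rev w)"
proof (induction w arbitrary: a)
  case Nil
  then show ?case by simp
next
  case (Cons i w)
  have "sg (\<lambda>r. - f (T - r)) a b (i # w)
     = integral {a..b} (\<lambda>r. (\<lambda>s. (-1) ^ Suc (length w) * (sg f (T - b) s (rev w) * f s $ i)) (T - r))"
    by (simp add: Cons.IH algebra_simps)
  also have "\<dots> = integral {T-b..T-a} (\<lambda>s. (-1) ^ Suc (length w) * (sg f (T - b) s (rev w) * f s $ i))"
    by (rule int_refl)
  also have "\<dots> = (-1) ^ Suc (length w) * integral {T-b..T-a} (\<lambda>s. sg f (T - b) s (rev w) * f s $ i)"
    by simp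
  also have "\<dots> = (-1) ^ length (i # w) * sg f (T - b) (T - a) (rev (i # w))"
    by (simp add: chen_last[OF f])
  finally show ?case .
qed

lemma sg_fact_bound:
  assumes f: "good M f"
  shows "a \<le> b \<Longrightarrow> \<bar>sg f a b w\<bar> \<le> (M * (b - a)) ^ length w / fact (length w)"
proof (induction w arbitrary: a)
  case Nil
  then show ?case by simp
next
  case (Cons i w)
  define n where "n = length w"
  have M0: "0 \<le> M" using good_M0[OF f] .
  define F where "F s = -((M * (b - s)) ^ Suc n / fact (Suc n))" for s
  have der: "(F has_vector_derivative (M * ((M * (b - s)) ^ n / fact n))) (at s within {a..b})" for s
  proof -
    have "(F has_real_derivative (M * ((M * (b - s)) ^ n / fact n))) (at s within {a..b})"
    proof -
      have "((\<lambda>s. (M * (b - s)) ^ Suc n) has_real_derivative (real (Suc n) * (M * (b - s)) ^ n * (- M))) (at s within {a..b})"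
        by (rule derivative_eq_intros refl)+ (cases n, auto simp: algebra_simps)
      then have "(F has_real_derivative - ((real (Suc n) * (M * (b - s)) ^ n * (- M)) / fact (Suc n))) (at s within {a..b})"
        unfolding F_def by (intro derivative_intros DERIV_cdivide)
      moreover have "- ((real (Suc n) * (M * (b - s)) ^ n * (- M)) / fact (Suc n)) = M * ((M * (b - s)) ^ n / fact n)"
      proof -
        have pos: "(0::real) < fact n + fact n * real n" by (simp add: add_pos_nonneg)
        then have "fact n + fact n * real n \<noteq> (0::real)" by linarith
        then show ?thesis by (simp add: fact_Suc field_simps)
      qed
      ultimately show ?thesis by (simp add: mult.commute)
    qed
    then show ?thesis by (simp add: has_real_derivative_iff_has_vector_derivative)
  qed
  have hi: "((\<lambda>s. M * ((M * (b - s)) ^ n / fact n)) has_integral (F b - F a)) {a..b}"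
    by (rule fundamental_theorem_of_calculus) (use Cons.prems der in auto)
  have Fba: "F b - F a = (M * (b - a)) ^ Suc n / fact (Suc n)" unfolding F_def by simp
  have "\<bar>sg f a b (i # w)\<bar> = norm (integral {a..b} (\<lambda>s. f s $ i * sg f s b w))" by simp
  also have "\<dots> \<le> integral {a..b} (\<lambda>s. M * ((M * (b - s)) ^ n / fact n))"
  proof (rule integral_norm_bound_integral)
    show "(\<lambda>s. f s $ i * sg f s b w) integrable_on {a..b}"
      by (rule int_mc[OF good_meas[OF f] good_bnd[OF f] sg_cont1[OF f]])
    show "(\<lambda>s. M * ((M * (b - s)) ^ n / fact n)) integrable_on {a..b}" using hi by blast
    fix s assume "s \<in> {a..b}"
    then have "\<bar>sg f s b w\<bar> \<le> (M * (b - s)) ^ n / fact n" using Cons.IH[of s] unfolding n_def by auto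
    then show "norm (f s $ i * sg f s b w) \<le> M * ((M * (b - s)) ^ n / fact n)"
      unfolding real_norm_def abs_mult by (intro mult_mono good_bnd[OF f] M0) auto
  qed
  also have "\<dots> = (M * (b - a)) ^ length (i # w) / fact (length (i # w))"
    using integral_unique[OF hi] Fba n_def by simp
  finally show ?case .
qed

lemma sg_empty_int: "b < a \<Longrightarrow> sg f a b w = (if w = [] then 1 else 0)"
  by (cases w) auto

lemma sg_bound_T:
  assumes f: "good M f" and "a \<in> {0..T}" "b \<in> {0..T}"
  shows "\<bar>sg f a b w\<bar> \<le> (M * T) ^ length w / fact (length w)"
proof (cases "a \<le> b")
  case True
  have M0: "0 \<le> M" using good_M0[OF f] .
  have "\<bar>sg f a b w\<bar> \<le> (M * (b - a)) ^ length w / fact (length w)" by (rule sg_fact_bound[OF f True])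
  also have "\<dots> \<le> (M * T) ^ length w / fact (length w)"
    using assms M0 True by (intro divide_right_mono power_mono mult_left_mono) auto
  finally show ?thesis .
next
  case False
  have M0: "0 \<le> M" using good_M0[OF f] .
  then show ?thesis using sg_empty_int[of b a f w] False assms
    by (auto intro!: divide_nonneg_nonneg zero_le_power mult_nonneg_nonneg)
qed



lemma good_add:
  assumes x: "good M x" and g: "good M g" and e: "\<bar>e\<bar> \<le> 1"
  shows "good (2 * M) (\<lambda>s. x s + e *\<^sub>R g s)"
  unfolding good_def
proof (intro conjI allI)
  fix i
  have [measurable]: "(\<lambda>t. x t $ i) \<in> borel_measurable borel" "(\<lambda>t. g t $ i) \<in> borel_measurable borel"
    using good_meas[OF x] good_meas[OF g] by auto
  show "(\<lambda>t. (x t + e *\<^sub>R g t) $ i) \<in> borel_measurable borel" by simp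
  fix t
  have M0: "0 \<le> M" using good_M0[OF x] .
  have "\<bar>e * g t $ i\<bar> \<le> 1 * M" unfolding abs_mult using e good_bnd[OF g] by (intro mult_mono) auto
  then show "\<bar>(x t + e *\<^sub>R g t) $ i\<bar> \<le> 2 * M" using good_bnd[OF x, of t i] by simp
qed

lemma sg_bound_C:
  assumes f: "good M f" and "a \<in> {0..T}" "b \<in> {0..T}" "M * T \<le> C"
  shows "\<bar>sg f a b w\<bar> \<le> C ^ length w"
proof -
  have M0: "0 \<le> M" using good_M0[OF f] .
  have T0: "0 \<le> T" using assms by auto
  have "\<bar>sg f a b w\<bar> \<le> (M * T) ^ length w / fact (length w)" by (rule sg_bound_T[OF assms(1-3)])
  also have "\<dots> \<le> (M * T) ^ length w / 1"
    using M0 T0 by (intro divide_left_mono) (auto simp: fact_ge_1)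
  also have "\<dots> = (M * T) ^ length w" by simp
  also have "\<dots> \<le> C ^ length w" using M0 T0 assms(4) by (intro power_mono) auto
  finally show ?thesis .
qed

definition Bt :: "(real \<Rightarrow> real^'d) \<Rightarrow> (real \<Rightarrow> real^'d) \<Rightarrow> (real \<Rightarrow> real^'d) \<Rightarrow> real \<Rightarrow> real \<Rightarrow> 'd list \<Rightarrow> nat \<Rightarrow> real" where
  "Bt x g h a b w k = integral {a..b} (\<lambda>s. sg x a s (take k w) * g s $ (w ! k) * sg h s b (drop (Suc k) w))"

lemma delta_exact:
  assumes x: "good M x" and g: "good M g" and e: "\<bar>e\<bar> \<le> 1"
  shows "sg (\<lambda>s. x s + e *\<^sub>R g s) a b w - sg x a b w
       = e * (\<Sum>k<length w. Bt x g (\<lambda>s. x s + e *\<^sub>R g s) a b w k)"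
proof (induction w arbitrary: a)
  case Nil
  then show ?case by simp
next
  case (Cons i w)
  define h where "h = (\<lambda>s. x s + e *\<^sub>R g s)"
  have h: "good (2 * M) h" unfolding h_def by (rule good_add[OF x g e])
  have M0: "0 \<le> M" using good_M0[OF x] .
  have IH: "sg h r b w - sg x r b w = e * (\<Sum>k<length w. Bt x g h r b w k)" for r
    using Cons.IH unfolding h_def by blast
  have ih: "(\<lambda>r. h r $ i * sg h r b w) integrable_on {a..b}"
    by (rule int_mc[OF good_meas[OF h] good_bnd[OF h] sg_cont1[OF h]])
  have ix: "(\<lambda>r. x r $ i * sg x r b w) integrable_on {a..b}"
    by (rule int_mc[OF good_meas[OF x] good_bnd[OF x] sg_cont1[OF x]])
  have ixd: "(\<lambda>r. x r $ i * (sg h r b w - sg x r b w)) integrable_on {a..b}"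
    by (rule int_mc[OF good_meas[OF x] good_bnd[OF x]]) (intro continuous_intros sg_cont1[OF x] sg_cont1[OF h])
  have ig: "(\<lambda>r. g r $ i * sg h r b w) integrable_on {a..b}"
    by (rule int_mc[OF good_meas[OF g] good_bnd[OF g] sg_cont1[OF h]])
  have FTk: "integral {a..b} (\<lambda>r. x r $ i * Bt x g h r b w k) = Bt x g h a b (i # w) (Suc k)
     \<and> (\<lambda>r. x r $ i * Bt x g h r b w k) integrable_on {a..b}" if k: "k < length w" for k
  proof -
    obtain B where B: "\<And>s. s \<in> {a..b} \<Longrightarrow> \<bar>sg h s b (drop (Suc k) w)\<bar> \<le> B" using sg_bdd_on[OF h] by blast
    have A: "(\<lambda>r. x r $ i * integral {r..b} (\<lambda>s. sg x r s (take k w) * (g s $ (w ! k) * sg h s b (drop (Suc k) w)))) integrable_on {a..b} \<and>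
        integral {a..b} (\<lambda>r. x r $ i * integral {r..b} (\<lambda>s. sg x r s (take k w) * (g s $ (w ! k) * sg h s b (drop (Suc k) w))))
      = integral {a..b} (\<lambda>s. integral {a..s} (\<lambda>r. x r $ i * sg x r s (take k w)) * (g s $ (w ! k) * sg h s b (drop (Suc k) w)))"
    proof (rule FT_both[where A=M and B="M*B"])
      show "(\<lambda>r. x r $ i) \<in> borel_measurable borel" using good_meas[OF x] .
      show "(\<lambda>s. g s $ (w ! k) * sg h s b (drop (Suc k) w)) \<in> borel_measurable borel"
        using good_meas[OF g] sg_meas1[OF h] by measurable
      show "continuous_on UNIV (\<lambda>p. sg x (fst p) (snd p) (take k w))" by (rule sg_cont[OF x])
      show "\<bar>x t $ i\<bar> \<le> M" for t using good_bnd[OF x] .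
      show "\<bar>g t $ (w ! k) * sg h t b (drop (Suc k) w)\<bar> \<le> M * B" if "t \<in> {a..b}" for t
        unfolding abs_mult using that by (intro mult_mono good_bnd[OF g] B M0) auto
    qed
    have e1: "(\<lambda>r. x r $ i * Bt x g h r b w k) = (\<lambda>r. x r $ i * integral {r..b} (\<lambda>s. sg x r s (take k w) * (g s $ (w ! k) * sg h s b (drop (Suc k) w))))"
      unfolding Bt_def by (simp add: mult.assoc)
    have e2: "Bt x g h a b (i # w) (Suc k) = integral {a..b} (\<lambda>s. integral {a..s} (\<lambda>r. x r $ i * sg x r s (take k w)) * (g s $ (w ! k) * sg h s b (drop (Suc k) w)))"
      unfolding Bt_def by (simp add: mult.assoc)
    show ?thesis using A unfolding e1 e2 by simp
  qed
  have "sg h a b (i # w) - sg x a b (i # w)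
      = integral {a..b} (\<lambda>r. x r $ i * (sg h r b w - sg x r b w)) + e * integral {a..b} (\<lambda>r. g r $ i * sg h r b w)"
  proof -
    have "sg h a b (i # w) - sg x a b (i # w) = integral {a..b} (\<lambda>r. h r $ i * sg h r b w - x r $ i * sg x r b w)"
      using integral_diff[OF ih ix] by simp
    also have "\<dots> = integral {a..b} (\<lambda>r. x r $ i * (sg h r b w - sg x r b w) + e * (g r $ i * sg h r b w))"
      unfolding h_def by (simp add: algebra_simps)
    also have "\<dots> = integral {a..b} (\<lambda>r. x r $ i * (sg h r b w - sg x r b w)) + e * integral {a..b} (\<lambda>r. g r $ i * sg h r b w)"
      using integral_add[OF ixd integrable_on_cmult_left[OF ig, of e]] by simp
    finally show ?thesis .
  qed
  also have "integral {a..b} (\<lambda>r. x r $ i * (sg h r b w - sg x r b w))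
      = e * (\<Sum>k<length w. integral {a..b} (\<lambda>r. x r $ i * Bt x g h r b w k))"
  proof -
    have "integral {a..b} (\<lambda>r. x r $ i * (sg h r b w - sg x r b w))
        = integral {a..b} (\<lambda>r. e * (\<Sum>k<length w. x r $ i * Bt x g h r b w k))"
      by (simp add: IH sum_distrib_left algebra_simps)
    also have "\<dots> = e * integral {a..b} (\<lambda>r. (\<Sum>k<length w. x r $ i * Bt x g h r b w k))"
      by simp
    also have "integral {a..b} (\<lambda>r. (\<Sum>k<length w. x r $ i * Bt x g h r b w k))
        = (\<Sum>k<length w. integral {a..b} (\<lambda>r. x r $ i * Bt x g h r b w k))"
      by (rule integral_sum) (use FTk in auto)
    finally show ?thesis .
  qed
  also have "(\<Sum>k<length w. integral {a..b} (\<lambda>r. x r $ i * Bt x g h r b w k))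
      = (\<Sum>k<length w. Bt x g h a b (i # w) (Suc k))"
    using FTk by simp
  also have "integral {a..b} (\<lambda>r. g r $ i * sg h r b w) = Bt x g h a b (i # w) 0"
    unfolding Bt_def by simp
  moreover have "(\<Sum>k<length (i # w). Bt x g h a b (i # w) k) = Bt x g h a b (i # w) 0 + (\<Sum>k<length w. Bt x g h a b (i # w) (Suc k))"
    by (simp only: length_Cons sum.lessThan_Suc_shift)
  ultimately have "sg h a b (i # w) - sg x a b (i # w) = e * (\<Sum>k<length (i # w). Bt x g h a b (i # w) k)"
    by (simp add: algebra_simps)
  then show ?case unfolding h_def .
qed

lemma int_T_bound:
  fixes F :: "real \<Rightarrow> real"
  assumes "F integrable_on {a..b}" "a \<in> {0..T}" "b \<in> {0..T}" "\<And>s. s \<in> {a..b} \<Longrightarrow> \<bar>F s\<bar> \<le> K" "0 \<le> K"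
  shows "\<bar>integral {a..b} F\<bar> \<le> K * T"
proof -
  have "\<bar>integral {a..b} F\<bar> \<le> K * max 0 (b - a)" by (rule int_bound_K) (use assms in auto)
  also have "\<dots> \<le> K * T"
  proof (cases "a \<le> b")
    case True
    then have "0 \<le> K" using assms(4)[of a] by force
    then show ?thesis using assms True by (intro mult_left_mono) auto
  qed (use assms in auto)
  finally show ?thesis .
qed

lemma int_prod3:
  fixes f1 g h :: "real \<Rightarrow> real^'d"
  assumes f1: "good M1 f1" and g: "good M g" and h: "good M2 h"
  shows "(\<lambda>s. sg f1 a s u * g s $ j * (sg h s b v - c * sg f1 s b v)) integrable_on {a..b}"
proof -
  have "(\<lambda>s. g s $ j * (sg f1 a s u * (sg h s b v - c * sg f1 s b v))) integrable_on {a..b}"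
    by (rule int_mc[OF good_meas[OF g] good_bnd[OF g]])
       (intro continuous_intros sg_cont1[OF h] sg_cont1[OF f1] sg_cont2[OF f1])
  then show ?thesis by (simp add: mult_ac)
qed

lemma int_prod2:
  fixes f1 g h :: "real \<Rightarrow> real^'d"
  assumes f1: "good M1 f1" and g: "good M g" and h: "good M2 h"
  shows "(\<lambda>s. sg f1 a s u * g s $ j * sg h s b v) integrable_on {a..b}"
  using int_prod3[OF f1 g h, of a u j b v 0] by simp

lemma Bt_bound:
  assumes f1: "good M1 f1" and g: "good M g" and h: "good M2 h"
    and ab: "a \<in> {0..T}" "b \<in> {0..T}" and k: "k < length w"
    and C: "M1 * T \<le> C" "M2 * T \<le> C" "M * T \<le> C"
  shows "\<bar>Bt f1 g h a b w k\<bar> \<le> C ^ length w"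
proof -
  have M0: "0 \<le> M" using good_M0[OF g] .
  have T0: "0 \<le> T" using ab by auto
  have C0: "0 \<le> C" using C(3) M0 T0 by (meson mult_nonneg_nonneg order_trans)
  have "\<bar>Bt f1 g h a b w k\<bar> \<le> (C ^ k * M * C ^ (length w - Suc k)) * T"
    unfolding Bt_def
  proof (rule int_T_bound[OF int_prod2[OF f1 g h] ab])
    fix s assume s: "s \<in> {a..b}"
    then have s': "s \<in> {0..T}" using ab by auto
    have "\<bar>sg f1 a s (take k w)\<bar> \<le> C ^ length (take k w)" by (rule sg_bound_C[OF f1 ab(1) s' C(1)])
    then have 1: "\<bar>sg f1 a s (take k w)\<bar> \<le> C ^ k" using k by simp
    have "\<bar>sg h s b (drop (Suc k) w)\<bar> \<le> C ^ length (drop (Suc k) w)" by (rule sg_bound_C[OF h s' ab(2) C(2)])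
    then have 2: "\<bar>sg h s b (drop (Suc k) w)\<bar> \<le> C ^ (length w - Suc k)" by simp
    show "\<bar>sg f1 a s (take k w) * g s $ (w ! k) * sg h s b (drop (Suc k) w)\<bar> \<le> C ^ k * M * C ^ (length w - Suc k)"
      unfolding abs_mult using 1 2 good_bnd[OF g] C0 M0 by (intro mult_mono) auto
  qed (use C0 M0 in auto)
  also have "\<dots> = C ^ k * (M * T) * C ^ (length w - Suc k)" by (simp add: algebra_simps)
  also have "\<dots> \<le> C ^ k * C * C ^ (length w - Suc k)"
    using C C0 by (intro mult_right_mono mult_left_mono) auto
  also have "\<dots> = C ^ length w"
  proof -
    have "length w = k + Suc (length w - Suc k)" using k by simp
    then have "C ^ length w = C ^ k * C ^ Suc (length w - Suc k)" by (metis power_add)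
    then show ?thesis by simp
  qed
  finally show ?thesis .
qed

lemma sum_le_card:
  fixes F :: "nat \<Rightarrow> real"
  assumes "\<And>k. k < n \<Longrightarrow> \<bar>F k\<bar> \<le> B"
  shows "\<bar>\<Sum>k<n. F k\<bar> \<le> real n * B"
proof -
  have "\<bar>\<Sum>k<n. F k\<bar> \<le> (\<Sum>k<n. \<bar>F k\<bar>)" by (rule sum_abs)
  also have "\<dots> \<le> (\<Sum>k<n. B)" using assms by (intro sum_mono) auto
  finally show ?thesis by simp
qed

lemma delta_bound:
  assumes x: "good M x" and g: "good M g" and e: "\<bar>e\<bar> \<le> 1"
    and ab: "a \<in> {0..T}" "b \<in> {0..T}"
  shows "\<bar>sg (\<lambda>s. x s + e *\<^sub>R g s) a b w - sg x a b w\<bar> \<le> \<bar>e\<bar> * (real (length w) * (2 * M * T) ^ length w)"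
proof -
  have M0: "0 \<le> M" using good_M0[OF x] .
  have T0: "0 \<le> T" using ab by auto
  have h: "good (2 * M) (\<lambda>s. x s + e *\<^sub>R g s)" by (rule good_add[OF x g e])
  have "\<bar>\<Sum>k<length w. Bt x g (\<lambda>s. x s + e *\<^sub>R g s) a b w k\<bar> \<le> real (length w) * (2 * M * T) ^ length w"
    by (rule sum_le_card, rule Bt_bound[OF x g h ab]) (use M0 T0 in \<open>auto intro: mult_right_mono\<close>)
  then show ?thesis unfolding delta_exact[OF x g e] abs_mult
    by (intro mult_left_mono) auto
qed

definition Dw :: "(real \<Rightarrow> real^'d) \<Rightarrow> (real \<Rightarrow> real^'d) \<Rightarrow> real \<Rightarrow> real \<Rightarrow> 'd list \<Rightarrow> real" where
  "Dw x g a b w = (\<Sum>k<length w. Bt x g x a b w k)"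

lemma second_order:
  assumes x: "good M x" and g: "good M g" and e: "\<bar>e\<bar> \<le> 1"
    and ab: "a \<in> {0..T}" "b \<in> {0..T}"
  shows "\<bar>sg (\<lambda>s. x s + e *\<^sub>R g s) a b w - sg x a b w - e * Dw x g a b w\<bar>
     \<le> e\<^sup>2 * (real (length w) ^ 2 * (2 * M * T) ^ length w)"
proof -
  define C where "C = 2 * M * T"
  define n where "n = length w"
  have M0: "0 \<le> M" using good_M0[OF x] .
  have T0: "0 \<le> T" using ab by auto
  have C0: "0 \<le> C" unfolding C_def using M0 T0 by simp
  have MC: "M * T \<le> C" unfolding C_def using M0 T0 by (simp add: mult_right_mono)
  define h where "h = (\<lambda>s. x s + e *\<^sub>R g s)"
  have h: "good (2 * M) h" unfolding h_def by (rule good_add[OF x g e])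
  have diffk: "\<bar>Bt x g h a b w k - Bt x g x a b w k\<bar> \<le> \<bar>e\<bar> * real n * C ^ n" if k: "k < n" for k
  proof -
    have "Bt x g h a b w k - Bt x g x a b w k
        = integral {a..b} (\<lambda>s. sg x a s (take k w) * g s $ (w ! k) * (sg h s b (drop (Suc k) w) - 1 * sg x s b (drop (Suc k) w)))"
      unfolding Bt_def
      by (subst integral_diff[OF int_prod2[OF x g h] int_prod2[OF x g x], symmetric]) (simp add: algebra_simps)
    also have "\<bar>\<dots>\<bar> \<le> (C ^ k * M * (\<bar>e\<bar> * (real n * C ^ (n - Suc k)))) * T"
    proof (rule int_T_bound[OF int_prod3[OF x g h] ab])
      fix s assume s: "s \<in> {a..b}"
      then have s': "s \<in> {0..T}" using ab by auto
      have "\<bar>sg x a s (take k w)\<bar> \<le> C ^ length (take k w)" by (rule sg_bound_C[OF x ab(1) s' MC])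
      then have 1: "\<bar>sg x a s (take k w)\<bar> \<le> C ^ k" using k unfolding n_def by simp
      have "\<bar>sg h s b (drop (Suc k) w) - sg x s b (drop (Suc k) w)\<bar>
          \<le> \<bar>e\<bar> * (real (length (drop (Suc k) w)) * C ^ length (drop (Suc k) w))"
        unfolding h_def C_def by (rule delta_bound[OF x g e s' ab(2)])
      also have "\<dots> \<le> \<bar>e\<bar> * (real n * C ^ (n - Suc k))"
      proof -
        have nle: "real (length w - Suc k) \<le> real (length w)" by simp
        show ?thesis unfolding n_def length_drop using C0 nle by (intro mult_left_mono mult_right_mono) auto
      qed
      finally have 2: "\<bar>sg h s b (drop (Suc k) w) - 1 * sg x s b (drop (Suc k) w)\<bar> \<le> \<bar>e\<bar> * (real n * C ^ (n - Suc k))"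
        by simp
      show "\<bar>sg x a s (take k w) * g s $ (w ! k) * (sg h s b (drop (Suc k) w) - 1 * sg x s b (drop (Suc k) w))\<bar>
          \<le> C ^ k * M * (\<bar>e\<bar> * (real n * C ^ (n - Suc k)))"
        unfolding abs_mult[of "sg x a s (take k w) * g s $ (w ! k)"] abs_mult[of "sg x a s (take k w)"]
        using 1 2 good_bnd[OF g] C0 M0 by (intro mult_mono) auto
    qed (use C0 M0 in auto)
    also have "\<dots> = \<bar>e\<bar> * real n * (C ^ k * (M * T) * C ^ (n - Suc k))" by (simp add: algebra_simps)
    also have "\<dots> \<le> \<bar>e\<bar> * real n * (C ^ k * C * C ^ (n - Suc k))"
      using MC C0 by (intro mult_left_mono mult_right_mono) auto
    also have "C ^ k * C * C ^ (n - Suc k) = C ^ n"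
    proof -
      have "n = k + Suc (n - Suc k)" using k by simp
      then have "C ^ n = C ^ k * C ^ Suc (n - Suc k)" by (metis power_add)
      then show ?thesis by simp
    qed
    finally show ?thesis .
  qed
  have "sg h a b w - sg x a b w - e * Dw x g a b w = e * (\<Sum>k<n. Bt x g h a b w k - Bt x g x a b w k)"
    unfolding delta_exact[OF x g e, folded h_def] Dw_def n_def by (simp add: sum_subtractf algebra_simps)
  also have "\<bar>\<dots>\<bar> \<le> \<bar>e\<bar> * (real n * (\<bar>e\<bar> * real n * C ^ n))"
    unfolding abs_mult by (intro mult_left_mono sum_le_card diffk) auto
  also have "\<dots> = e\<^sup>2 * (real n ^ 2 * C ^ n)" by (simp add: power2_eq_square algebra_simps)
  finally show ?thesis unfolding h_def C_def n_def .
qed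



definition sk :: "(real \<Rightarrow> real^'d) \<Rightarrow> real \<Rightarrow> real \<Rightarrow> (real \<Rightarrow> real^'d) \<Rightarrow> real \<Rightarrow> real \<Rightarrow> real" where
  "sk f a b g c e = (\<Sum>j. \<Sum>w\<in>{w::'d list. length w = j}. sg f a b w * sg g c e w)"

lemma sigker_sk: "sigker Z a b W c e = sk (dot Z) a b (dot W) c e"
  unfolding sigker_def sk_def sig_sg ..

lemma finite_W: "finite {w::'d::finite list. length w = j}"
  using finite_lists_length_eq[of "UNIV::'d set" j] by simp

lemma card_W: "card {w::'d::finite list. length w = j} = CARD('d) ^ j"
  using card_lists_length_eq[of "UNIV::'d set" j] by simp

lemma sum_W_bound:
  fixes G :: "'d::finite list \<Rightarrow> real"
  assumes "\<And>w. length w = j \<Longrightarrow> \<bar>G w\<bar> \<le> B"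
  shows "\<bar>\<Sum>w\<in>{w::'d list. length w = j}. G w\<bar> \<le> real CARD('d) ^ j * B"
proof -
  have "\<bar>\<Sum>w\<in>{w::'d list. length w = j}. G w\<bar> \<le> (\<Sum>w\<in>{w::'d list. length w = j}. \<bar>G w\<bar>)" by (rule sum_abs)
  also have "\<dots> \<le> (\<Sum>w\<in>{w::'d list. length w = j}. B)" using assms by (intro sum_mono) auto
  also have "\<dots> = real CARD('d) ^ j * B" using card_W[where 'd='d, of j] by simp
  finally show ?thesis .
qed

lemma summable_fact_bound:
  fixes F :: "nat \<Rightarrow> real"
  assumes "\<And>j. \<bar>F j\<bar> \<le> K * (L ^ j / fact j)"
  shows "summable F"
proof (rule summable_comparison_test)
  show "\<exists>N. \<forall>n\<ge>N. norm (F n) \<le> K * (L ^ n / fact n)" using assms by auto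
  show "summable (\<lambda>n. K * (L ^ n / fact n))"
    using summable_mult[OF summable_exp[of L], of K] by (simp add: field_simps)
qed

lemma sq_le_4pow: "real j ^ 2 \<le> 4 ^ j"
proof -
  have "real j \<le> 2 ^ j" using less_exp[of j] by (metis less_imp_le of_nat_le_iff of_nat_numeral of_nat_power)
  then have "real j ^ 2 \<le> (2 ^ j) ^ 2" by (intro power_mono) auto
  also have "\<dots> = 4 ^ j" by (simp add: power2_eq_square power_mult_distrib[symmetric])
  finally show ?thesis .
qed

lemma summable_fact_bound2:
  fixes F :: "nat \<Rightarrow> real"
  assumes "\<And>j. \<bar>F j\<bar> \<le> K * (real j ^ 2 * (L ^ j / fact j))" "0 \<le> K" "0 \<le> L"
  shows "summable F"
proof (rule summable_fact_bound[where K=K and L="4*L"])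
  fix j
  have "\<bar>F j\<bar> \<le> K * (real j ^ 2 * (L ^ j / fact j))" by (rule assms)
  also have "\<dots> \<le> K * (4 ^ j * (L ^ j / fact j))"
    using assms(2,3) sq_le_4pow[of j] by (intro mult_left_mono mult_right_mono) auto
  also have "\<dots> = K * ((4 * L) ^ j / fact j)" by (simp add: power_mult_distrib)
  finally show "\<bar>F j\<bar> \<le> K * ((4 * L) ^ j / fact j)" .
qed

lemma deriv_sk:
  fixes x g y :: "real \<Rightarrow> real^'d"
  assumes x: "good M x" and g: "good M g" and y: "good M y" and T: "0 \<le> T"
  shows "((\<lambda>e. sk (\<lambda>s. x s + e *\<^sub>R g s) 0 T y 0 T) has_real_derivative
           (\<Sum>j. \<Sum>w\<in>{w::'d list. length w = j}. Dw x g 0 T w * sg y 0 T w)) (at 0)"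
proof -
  define C where "C = 2 * M * T"
  define d where "d = real CARD('d)"
  have M0: "0 \<le> M" using good_M0[OF x] .
  have C0: "0 \<le> C" unfolding C_def using M0 T by simp
  have MC: "M * T \<le> C" unfolding C_def using M0 T by (simp add: mult_right_mono)
  have d0: "0 \<le> d" unfolding d_def by simp
  have ab: "0 \<in> {0..T}" "T \<in> {0..T}" using T by auto
  define a where "a e j = (\<Sum>w\<in>{w::'d list. length w = j}. sg (\<lambda>s. x s + e *\<^sub>R g s) 0 T w * sg y 0 T w)" for e j
  define D where "D j = (\<Sum>w\<in>{w::'d list. length w = j}. Dw x g 0 T w * sg y 0 T w)" for j
  define R where "R j = d ^ j * (real j ^ 2 * C ^ j) * ((M * T) ^ j / fact j)" for j
  have yb: "\<bar>sg y 0 T w\<bar> \<le> (M * T) ^ length w / fact (length w)" for w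
    by (rule sg_bound_T[OF y ab])
  have a_bound: "\<bar>a e j\<bar> \<le> 1 * ((d * C * (M * T)) ^ j / fact j)" if e: "\<bar>e\<bar> \<le> 1" for e j
  proof -
    have h: "good (2 * M) (\<lambda>s. x s + e *\<^sub>R g s)" by (rule good_add[OF x g e])
    have "\<bar>a e j\<bar> \<le> d ^ j * (C ^ j * ((M * T) ^ j / fact j))"
      unfolding a_def d_def
    proof (rule sum_W_bound)
      fix w :: "'d list" assume "length w = j"
      moreover have "\<bar>sg (\<lambda>s. x s + e *\<^sub>R g s) 0 T w\<bar> \<le> C ^ length w"
        by (rule sg_bound_C[OF h ab]) (simp add: C_def)
      ultimately show "\<bar>sg (\<lambda>s. x s + e *\<^sub>R g s) 0 T w * sg y 0 T w\<bar> \<le> C ^ j * ((M * T) ^ j / fact j)"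
        unfolding abs_mult using yb[of w] C0 by (intro mult_mono) auto
    qed
    then show ?thesis by (simp add: power_mult_distrib)
  qed
  have summ_a: "summable (a e)" if "\<bar>e\<bar> \<le> 1" for e
    by (rule summable_fact_bound[OF a_bound[OF that]])
  have D_bound: "\<bar>D j\<bar> \<le> 1 * (real j ^ 2 * ((d * C * (M * T)) ^ j / fact j))" for j
  proof -
    have "\<bar>D j\<bar> \<le> d ^ j * ((real j * C ^ j) * ((M * T) ^ j / fact j))"
      unfolding D_def d_def
    proof (rule sum_W_bound)
      fix w :: "'d list" assume w: "length w = j"
      have "\<bar>Dw x g 0 T w\<bar> \<le> real (length w) * C ^ length w"
        unfolding Dw_def by (rule sum_le_card, rule Bt_bound[OF x g x ab]) (use MC in auto)
      then show "\<bar>Dw x g 0 T w * sg y 0 T w\<bar> \<le> (real j * C ^ j) * ((M * T) ^ j / fact j)"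
        unfolding abs_mult using yb[of w] w C0 by (intro mult_mono) auto
    qed
    also have "\<dots> \<le> d ^ j * ((real j ^ 2 * C ^ j) * ((M * T) ^ j / fact j))"
    proof -
      have "real j \<le> real j ^ 2" by (cases j) (auto simp: power2_eq_square)
      then show ?thesis using C0 d0 M0 T
        by (intro mult_left_mono mult_right_mono) (auto intro!: divide_nonneg_nonneg)
    qed
    finally show ?thesis by (simp add: power_mult_distrib algebra_simps)
  qed
  have summ_D: "summable D"
    by (rule summable_fact_bound2[OF D_bound]) (use C0 d0 M0 T in auto)
  have R_eq: "R j = 1 * (real j ^ 2 * ((d * C * (M * T)) ^ j / fact j))" for j
    unfolding R_def by (simp add: power_mult_distrib algebra_simps)
  have summ_R: "summable R"
    by (rule summable_fact_bound2[where K=1 and L="d * C * (M * T)"]) (use C0 d0 M0 T R_eq in auto)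
  have F_eq: "sk (\<lambda>s. x s + e *\<^sub>R g s) 0 T y 0 T = suminf (a e)" for e
    unfolding sk_def a_def ..
  have a0: "a 0 = (\<lambda>j. \<Sum>w\<in>{w::'d list. length w = j}. sg x 0 T w * sg y 0 T w)"
    unfolding a_def by simp
  have main: "\<bar>suminf (a e) - suminf (a 0) - e * suminf D\<bar> \<le> e\<^sup>2 * suminf R" if e: "\<bar>e\<bar> \<le> 1" for e
  proof -
    have e0: "\<bar>0::real\<bar> \<le> 1" by simp
    have "suminf (a e) - suminf (a 0) - e * suminf D = (\<Sum>j. a e j - a 0 j - e * D j)"
      using suminf_diff[OF summable_diff[OF summ_a[OF e] summ_a[OF e0]] summable_mult[OF summ_D, of e]]
        suminf_diff[OF summ_a[OF e] summ_a[OF e0]] suminf_mult[OF summ_D, of e] by simp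
    also have "\<bar>\<dots>\<bar> \<le> (\<Sum>j. e\<^sup>2 * R j)"
    proof -
      have sR: "summable (\<lambda>j. e\<^sup>2 * R j)" by (rule summable_mult[OF summ_R])
      have bnd: "\<bar>a e j - a 0 j - e * D j\<bar> \<le> e\<^sup>2 * R j" for j
      proof -
      have "a e j - a 0 j - e * D j
          = (\<Sum>w\<in>{w::'d list. length w = j}. sg (\<lambda>s. x s + e *\<^sub>R g s) 0 T w * sg y 0 T w)
           - (\<Sum>w\<in>{w::'d list. length w = j}. sg x 0 T w * sg y 0 T w)
           - (\<Sum>w\<in>{w::'d list. length w = j}. e * (Dw x g 0 T w * sg y 0 T w))"
        unfolding a_def D_def by (simp add: sum_distrib_left)
      also have "\<dots> = (\<Sum>w\<in>{w::'d list. length w = j}. sg (\<lambda>s. x s + e *\<^sub>R g s) 0 T w * sg y 0 T w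
           - sg x 0 T w * sg y 0 T w - e * (Dw x g 0 T w * sg y 0 T w))"
        by (simp only: sum_subtractf)
      also have "\<dots> = (\<Sum>w\<in>{w::'d list. length w = j}. (sg (\<lambda>s. x s + e *\<^sub>R g s) 0 T w - sg x 0 T w - e * Dw x g 0 T w) * sg y 0 T w)"
        by (rule sum.cong) (simp_all add: algebra_simps)
      also have "\<bar>\<dots>\<bar> \<le> d ^ j * ((e\<^sup>2 * (real j ^ 2 * C ^ j)) * ((M * T) ^ j / fact j))"
        unfolding d_def
      proof (rule sum_W_bound)
        fix w :: "'d list" assume w: "length w = j"
        have "\<bar>sg (\<lambda>s. x s + e *\<^sub>R g s) 0 T w - sg x 0 T w - e * Dw x g 0 T w\<bar> \<le> e\<^sup>2 * (real (length w) ^ 2 * C ^ length w)"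
          unfolding C_def by (rule second_order[OF x g e ab])
        then show "\<bar>(sg (\<lambda>s. x s + e *\<^sub>R g s) 0 T w - sg x 0 T w - e * Dw x g 0 T w) * sg y 0 T w\<bar>
            \<le> (e\<^sup>2 * (real j ^ 2 * C ^ j)) * ((M * T) ^ j / fact j)"
          unfolding abs_mult using yb[of w] w C0 by (intro mult_mono) auto
      qed
      also have "\<dots> = e\<^sup>2 * R j" unfolding R_def by (simp add: algebra_simps)
      finally show "\<bar>a e j - a 0 j - e * D j\<bar> \<le> e\<^sup>2 * R j" .
      qed
      show ?thesis using norm_suminf_le[of "\<lambda>j. a e j - a 0 j - e * D j" "\<lambda>j. e\<^sup>2 * R j"] bnd sR by simp
    qed
    also have "\<dots> = e\<^sup>2 * suminf R" by (rule suminf_mult[OF summ_R])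
    finally show ?thesis .
  qed
  have F0: "sk (\<lambda>s. x s + 0 *\<^sub>R g s) 0 T y 0 T = suminf (a 0)" by (rule F_eq)
  show ?thesis
    unfolding has_field_derivative_iff D_def[symmetric]
  proof (subst LIM_zero_iff[symmetric], rule Lim_null_comparison)
    have "((\<lambda>e. \<bar>e\<bar> * suminf R) \<longlongrightarrow> \<bar>0\<bar> * suminf R) (at 0)"
      by (intro tendsto_intros)
    then show "((\<lambda>e. \<bar>e\<bar> * suminf R) \<longlongrightarrow> 0) (at 0)" by simp
    show "\<forall>\<^sub>F e in at 0. norm ((sk (\<lambda>s. x s + e *\<^sub>R g s) 0 T y 0 T - sk (\<lambda>s. x s + 0 *\<^sub>R g s) 0 T y 0 T) / (e - 0) - suminf D) \<le> \<bar>e\<bar> * suminf R"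
      unfolding eventually_at
    proof (intro exI[of _ 1] conjI ballI impI)
      fix e :: real assume "e \<noteq> 0 \<and> dist e 0 < 1"
      then have e0: "e \<noteq> 0" and e1: "\<bar>e\<bar> \<le> 1" by (auto simp: dist_real_def)
      have "(suminf (a e) - suminf (a 0)) / e - suminf D = (suminf (a e) - suminf (a 0) - e * suminf D) / e"
        using e0 by (simp add: field_simps)
      also have "\<bar>\<dots>\<bar> \<le> e\<^sup>2 * suminf R / \<bar>e\<bar>"
        unfolding abs_divide using main[OF e1] e0 by (intro divide_right_mono) auto
      also have "\<dots> = \<bar>e\<bar> * suminf R"
      proof -
        have "e\<^sup>2 * suminf R / \<bar>e\<bar> = (\<bar>e\<bar> * \<bar>e\<bar>) * suminf R / \<bar>e\<bar>" by (simp add: power2_eq_square)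
        also have "\<dots> = \<bar>e\<bar> * suminf R" using e0 by (simp del: abs_mult_self_eq)
        finally show ?thesis .
      qed
      finally have fin: "\<bar>(suminf (a e) - suminf (a 0)) / e - suminf D\<bar> \<le> \<bar>e\<bar> * suminf R" .
      have eqq: "(sk (\<lambda>s. x s + e *\<^sub>R g s) 0 T y 0 T - sk (\<lambda>s. x s + 0 *\<^sub>R g s) 0 T y 0 T) / (e - 0) - suminf D
          = (suminf (a e) - suminf (a 0)) / e - suminf D"
        by (simp only: F_eq diff_0_right)
      show "norm ((sk (\<lambda>s. x s + e *\<^sub>R g s) 0 T y 0 T - sk (\<lambda>s. x s + 0 *\<^sub>R g s) 0 T y 0 T) / (e - 0) - suminf D) \<le> \<bar>e\<bar> * suminf R"
        unfolding eqq real_norm_def by (rule fin)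
    qed simp
  qed
qed



lemma reindex_split:
  fixes F :: "'d::finite list \<Rightarrow> 'd \<Rightarrow> 'd list \<Rightarrow> real"
  shows "(\<Sum>w\<in>{w. length w = Suc n}. \<Sum>k<Suc n. F (take k w) (w ! k) (drop (Suc k) w))
       = (\<Sum>p\<le>n. \<Sum>u\<in>{u. length u = p}. \<Sum>v\<in>{v. length v = n - p}. \<Sum>i\<in>UNIV. F u i v)"
proof -
  have "(\<Sum>w\<in>{w. length w = Suc n}. \<Sum>k<Suc n. F (take k w) (w ! k) (drop (Suc k) w))
      = (\<Sum>k<Suc n. \<Sum>w\<in>{w. length w = Suc n}. F (take k w) (w ! k) (drop (Suc k) w))"
    by (rule sum.swap)
  also have "\<dots> = (\<Sum>p\<le>n. \<Sum>w\<in>{w. length w = Suc n}. F (take p w) (w ! p) (drop (Suc p) w))"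
    by (simp only: lessThan_Suc_atMost)
  also have "\<dots> = (\<Sum>p\<le>n. \<Sum>u\<in>{u. length u = p}. \<Sum>v\<in>{v. length v = n - p}. \<Sum>i\<in>UNIV. F u i v)"
  proof (rule sum.cong[OF refl])
    fix p assume p: "p \<in> {..n}"
    have "(\<Sum>w\<in>{w. length w = Suc n}. F (take p w) (w ! p) (drop (Suc p) w))
        = (\<Sum>z\<in>{u. length u = p} \<times> {v. length v = n - p} \<times> (UNIV::'d set). F (fst z) (snd (snd z)) (fst (snd z)))"
    proof (rule sum.reindex_bij_witness[where i="\<lambda>z. fst z @ snd (snd z) # fst (snd z)"
          and j="\<lambda>w. (take p w, drop (Suc p) w, w ! p)"])
      fix w :: "'d list" assume w: "w \<in> {w. length w = Suc n}"
      then have pl: "p < length w" using p by auto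
      show "fst (take p w, drop (Suc p) w, w ! p) @ snd (snd (take p w, drop (Suc p) w, w ! p)) # fst (snd (take p w, drop (Suc p) w, w ! p)) = w"
        using id_take_nth_drop[OF pl] by simp
      show "(take p w, drop (Suc p) w, w ! p) \<in> {u. length u = p} \<times> {v. length v = n - p} \<times> UNIV"
        using w p by auto
      show "F (fst (take p w, drop (Suc p) w, w ! p)) (snd (snd (take p w, drop (Suc p) w, w ! p))) (fst (snd (take p w, drop (Suc p) w, w ! p)))
          = F (take p w) (w ! p) (drop (Suc p) w)" by simp
    next
      fix z :: "'d list \<times> 'd list \<times> 'd" assume z: "z \<in> {u. length u = p} \<times> {v. length v = n - p} \<times> UNIV"
      obtain u v i where zz: "z = (u, v, i)" by (cases z) auto
      show "(take p (fst z @ snd (snd z) # fst (snd z)), drop (Suc p) (fst z @ snd (snd z) # fst (snd z)), (fst z @ snd (snd z) # fst (snd z)) ! p) = z"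
        using z zz by auto
      show "fst z @ snd (snd z) # fst (snd z) \<in> {w. length w = Suc n}" using z zz p by auto
    qed
    also have "\<dots> = (\<Sum>u\<in>{u. length u = p}. \<Sum>v\<in>{v. length v = n - p}. \<Sum>i\<in>UNIV. F u i v)"
      by (simp add: sum.cartesian_product split_beta)
    finally show "(\<Sum>w\<in>{w. length w = Suc n}. F (take p w) (w ! p) (drop (Suc p) w)) = \<dots>" .
  qed
  finally show ?thesis .
qed

lemma int_suminf:
  fixes f :: "nat \<Rightarrow> real \<Rightarrow> real"
  assumes int: "\<And>n. f n integrable_on {a..b}" and bnd: "\<And>n x. x \<in> {a..b} \<Longrightarrow> \<bar>f n x\<bar> \<le> B n"
    and sB: "summable B"
  shows "(\<lambda>n. integral {a..b} (f n)) sums integral {a..b} (\<lambda>x. \<Sum>n. f n x)"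
proof -
  have sx: "summable (\<lambda>n. f n x)" if "x \<in> {a..b}" for x
    by (rule summable_comparison_test[OF _ sB]) (use bnd that in auto)
  have DC: "(\<lambda>k. integral {a..b} (\<lambda>x. \<Sum>n<k. f n x)) \<longlonglongrightarrow> integral {a..b} (\<lambda>x. \<Sum>n. f n x)"
  proof (rule dominated_convergence(2)[where h="\<lambda>_. suminf B"])
    show "(\<lambda>x. \<Sum>n<k. f n x) integrable_on {a..b}" for k
      by (rule integrable_sum) (use int in auto)
    show "(\<lambda>_. suminf B) integrable_on {a..b}" by (rule Henstock_Kurzweil_Integration.integrable_const_ivl)
    show "norm (\<Sum>n<k. f n x) \<le> suminf B" if x: "x \<in> {a..b}" for k x
    proof -
      have B0: "0 \<le> B n" for n using bnd[OF x, of n] by linarith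
      have "norm (\<Sum>n<k. f n x) \<le> (\<Sum>n<k. B n)"
        unfolding real_norm_def by (rule order_trans[OF sum_abs sum_mono]) (use bnd x in auto)
      also have "\<dots> \<le> suminf B" by (rule sum_le_suminf[OF sB]) (use B0 in auto)
      finally show ?thesis .
    qed
    show "(\<lambda>k. \<Sum>n<k. f n x) \<longlonglongrightarrow> (\<Sum>n. f n x)" if "x \<in> {a..b}" for x
      using summable_LIMSEQ[OF sx[OF that]] .
  qed
  have "integral {a..b} (\<lambda>x. \<Sum>n<k. f n x) = (\<Sum>n<k. integral {a..b} (f n))" for k
    by (rule integral_sum) (use int in auto)
  then show ?thesis using DC unfolding sums_def by simp
qed

lemma pq_bound:
  fixes z :: real
  assumes "p \<le> n" "0 \<le> z"
  shows "z ^ p / fact p * (z ^ (n - p) / fact (n - p)) \<le> z ^ n * 2 ^ n / fact n"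
proof -
  have fl: "fact p * fact (n - p) * real (n choose p) = fact n"
    using binomial_fact_lemma[OF assms(1)] by (metis of_nat_fact of_nat_mult)
  have zp: "z ^ p * z ^ (n - p) = z ^ n" using assms(1) by (simp add: power_add[symmetric])
  have pos: "(0::real) < fact p * fact (n - p)" by simp
  have "z ^ p / fact p * (z ^ (n - p) / fact (n - p)) = z ^ n * real (n choose p) / fact n"
    using fl zp pos by (simp add: field_simps)
  also have "\<dots> \<le> z ^ n * 2 ^ n / fact n"
  proof -
    have "real (n choose p) \<le> 2 ^ n" using binomial_le_pow2[of n p] by (metis of_nat_le_iff of_nat_numeral of_nat_power)
    then show ?thesis using assms by (intro divide_right_mono mult_left_mono) auto
  qed
  finally show ?thesis .
qed

lemma triple_prod:
  fixes a b c :: "_ \<Rightarrow> real"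
  shows "sum a A * sum b B * sum c C = (\<Sum>u\<in>A. \<Sum>v\<in>B. \<Sum>i\<in>C. a u * b v * c i)"
proof -
  have "sum a A * sum b B * sum c C = sum a A * (sum b B * sum c C)" by (simp only: mult.assoc)
  also have "\<dots> = (\<Sum>u\<in>A. a u * (\<Sum>v\<in>B. b v * sum c C))" by (simp only: sum_distrib_right)
  also have "\<dots> = (\<Sum>u\<in>A. \<Sum>v\<in>B. a u * (b v * sum c C))" by (simp only: sum_distrib_left)
  also have "\<dots> = (\<Sum>u\<in>A. \<Sum>v\<in>B. \<Sum>i\<in>C. a u * (b v * c i))" by (simp only: sum_distrib_left)
  finally show ?thesis by (simp only: mult.assoc)
qed

lemma prodfact:
  fixes Q :: real
  assumes "0 \<le> Q"
  shows "Q ^ p / fact p * (Q ^ p / fact p) \<le> (Q\<^sup>2) ^ p / fact p"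
proof -
  have "Q ^ p / fact p * (Q ^ p / fact p) = (Q\<^sup>2) ^ p / (fact p * fact p)"
    by (simp add: power2_eq_square power_mult_distrib)
  also have "\<dots> \<le> (Q\<^sup>2) ^ p / fact p"
    by (rule divide_left_mono) (auto simp: fact_ge_1 intro: order_trans[OF fact_ge_1] mult_le_cancel_left1[THEN iffD2])
  finally show ?thesis .
qed



lemma double_integral:
  fixes x g y :: "real \<Rightarrow> real^'d"
  assumes x: "good M x" and g: "good M g" and y: "good M y" and T: "0 \<le> T"
  shows "(\<lambda>j. \<Sum>w\<in>{w::'d list. length w = j}. Dw x g 0 T w * sg y 0 T w) sums
           integral {0..T} (\<lambda>t. integral {0..T} (\<lambda>s. sk x 0 s y 0 t * sk x s T y t T * (g s \<bullet> y t)))"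
proof -
  define d where "d = real CARD('d)"
  define Q where "Q = M * T"
  have M0: "0 \<le> M" using good_M0[OF x] .
  have Q0: "0 \<le> Q" unfolding Q_def using M0 T by simp
  have d0: "0 \<le> d" unfolding d_def by simp
  define \<alpha> where "\<alpha> u i v s = sg x 0 s u * g s $ i * sg x s T v" for u i v s
  define \<beta> where "\<beta> u i v t = sg y 0 t u * y t $ i * sg y t T v" for u i v t
  define A where "A u i v = integral {0..T} (\<alpha> u i v)" for u i v
  define cc where "cc n s t = (\<Sum>p\<le>n. \<Sum>u\<in>{u::'d list. length u = p}. \<Sum>v\<in>{v::'d list. length v = n - p}.
      \<Sum>i\<in>UNIV. \<alpha> u i v s * \<beta> u i v t)" for n s t
  define K where "K n = M\<^sup>2 * ((4 * Q\<^sup>2) ^ n / fact n)" for n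
  define Bc where "Bc n = real (Suc n) * (d ^ Suc n * K n)" for n
  have K0: "0 \<le> K n" for n unfolding K_def by simp
  have Bc0: "0 \<le> Bc n" for n unfolding Bc_def using K0 d0 by simp
  have \<alpha>int: "(\<lambda>s. \<alpha> u i v s * c) integrable_on {0..T}" for u i v c
    unfolding \<alpha>_def using integrable_on_cmult_right[OF int_prod2[OF x g x], of 0 u i T v c] by simp
  have \<beta>int: "\<beta> u i v integrable_on {0..T}" for u i v
    unfolding \<beta>_def by (rule int_prod2[OF y y y])
  have \<beta>int': "(\<lambda>t. c * \<beta> u i v t) integrable_on {0..T}" for u i v c
    using integrable_on_cmult_left[OF \<beta>int, of c] by simp
  have sgb: "\<bar>sg f a b w\<bar> \<le> Q ^ length w / fact (length w)" if f: "good M f" and ab: "a \<in> {0..T}" "b \<in> {0..T}"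
    for f :: "real \<Rightarrow> real^'d" and a b w
    unfolding Q_def by (rule sg_bound_T[OF f ab])
  define Z where "Z n = Q ^ n * 2 ^ n / fact n" for n
  have Z0: "0 \<le> Z n" for n unfolding Z_def using Q0 by simp
  have ZZ: "Z n * Z n \<le> (4 * Q\<^sup>2) ^ n / fact n" for n
  proof -
    have "Z n * Z n = (4 * Q\<^sup>2) ^ n / (fact n * fact n)"
    proof -
      have e1: "Q ^ n * Q ^ n = (Q\<^sup>2) ^ n" by (simp add: power2_eq_square power_mult_distrib)
      have e2: "(2::real) ^ n * 2 ^ n = 4 ^ n" by (simp add: power_mult_distrib[symmetric])
      have "Z n * Z n = (Q ^ n * Q ^ n) * (2 ^ n * 2 ^ n) / (fact n * fact n)" unfolding Z_def by simp
      then show ?thesis unfolding e1 e2 by (simp add: power_mult_distrib)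
    qed
    also have "\<dots> \<le> (4 * Q\<^sup>2) ^ n / fact n"
      by (rule divide_left_mono) (auto simp: fact_ge_1 intro: order_trans[OF fact_ge_1] mult_le_cancel_left1[THEN iffD2])
    finally show ?thesis .
  qed
  have pb: "Q ^ p / fact p * (Q ^ (n - p) / fact (n - p)) \<le> Z n" if "p \<le> n" for p n
    unfolding Z_def by (rule pq_bound[OF that Q0])
  have gen_b: "\<bar>sg f 0 s u * f' s $ i * sg f s T v\<bar> \<le> M * Z n"
    if f: "good M f" and f': "good M f'" and s: "s \<in> {0..T}" and uv: "length u = p" "length v = n - p" "p \<le> n"
    for f f' :: "real \<Rightarrow> real^'d" and s u v i p n
  proof -
    have ab: "0 \<in> {0..T}" "T \<in> {0..T}" using T by auto
    have "\<bar>sg f 0 s u * f' s $ i * sg f s T v\<bar> \<le> (Q ^ p / fact p) * M * (Q ^ (n - p) / fact (n - p))"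
      unfolding abs_mult using sgb[OF f ab(1) s, of u] sgb[OF f s ab(2), of v] good_bnd[OF f'] uv M0 Q0
      by (intro mult_mono) auto
    also have "\<dots> = M * (Q ^ p / fact p * (Q ^ (n - p) / fact (n - p)))" by simp
    also have "\<dots> \<le> M * Z n" using pb[OF uv(3)] M0 by (rule mult_left_mono)
    finally show ?thesis .
  qed
  have termb: "\<bar>\<alpha> u i v s * \<beta> u i v t\<bar> \<le> K n"
    if s: "s \<in> {0..T}" and t: "t \<in> {0..T}" and uv: "length u = p" "length v = n - p" "p \<le> n" for u i v s t p n
  proof -
    have "\<bar>\<alpha> u i v s * \<beta> u i v t\<bar> \<le> (M * Z n) * (M * Z n)"
      unfolding \<alpha>_def \<beta>_def abs_mult[of "sg x 0 s u * g s $ i * sg x s T v"]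
      using gen_b[OF x g s uv] gen_b[OF y y t uv] M0 Z0
      by (intro mult_mono) auto
    also have "\<dots> = M\<^sup>2 * (Z n * Z n)" by (simp add: power2_eq_square)
    also have "\<dots> \<le> K n" unfolding K_def by (rule mult_left_mono[OF ZZ]) simp
    finally show ?thesis .
  qed
  have ccb: "\<bar>cc n s t\<bar> \<le> Bc n" if s: "s \<in> {0..T}" and t: "t \<in> {0..T}" for n s t
  proof -
    have Xp: "\<bar>\<Sum>u\<in>{u::'d list. length u = p}. \<Sum>v\<in>{v::'d list. length v = n - p}. \<Sum>i\<in>UNIV. \<alpha> u i v s * \<beta> u i v t\<bar>
        \<le> d ^ Suc n * K n" if p: "p \<le> n" for p
    proof -
      have "\<bar>\<Sum>u\<in>{u::'d list. length u = p}. \<Sum>v\<in>{v::'d list. length v = n - p}. \<Sum>i\<in>UNIV. \<alpha> u i v s * \<beta> u i v t\<bar>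
          \<le> d ^ p * (d ^ (n - p) * (d * K n))"
        unfolding d_def
      proof (rule sum_W_bound, rule sum_W_bound)
        fix u v :: "'d list" assume u: "length u = p" and v: "length v = n - p"
        have "\<bar>\<Sum>i\<in>UNIV. \<alpha> u i v s * \<beta> u i v t\<bar> \<le> (\<Sum>i\<in>UNIV. \<bar>\<alpha> u i v s * \<beta> u i v t\<bar>)" by (rule sum_abs)
        also have "\<dots> \<le> (\<Sum>i\<in>(UNIV::'d set). K n)" by (rule sum_mono) (rule termb[OF s t u v p])
        finally show "\<bar>\<Sum>i\<in>UNIV. \<alpha> u i v s * \<beta> u i v t\<bar> \<le> real CARD('d) * K n" by simp
      qed
      also have "\<dots> = d ^ Suc n * K n"
      proof -
        have "d ^ p * (d ^ (n - p) * (d * K n)) = d ^ (p + (n - p)) * d * K n" by (simp add: power_add)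
        then show ?thesis using p by simp
      qed
      finally show ?thesis .
    qed
    have "\<bar>cc n s t\<bar> \<le> (\<Sum>p\<le>n. \<bar>\<Sum>u\<in>{u::'d list. length u = p}. \<Sum>v\<in>{v::'d list. length v = n - p}. \<Sum>i\<in>UNIV. \<alpha> u i v s * \<beta> u i v t\<bar>)"
      unfolding cc_def by (rule sum_abs)
    also have "\<dots> \<le> (\<Sum>p\<le>n. d ^ Suc n * K n)" by (rule sum_mono) (use Xp in auto)
    also have "\<dots> = Bc n" unfolding Bc_def by simp
    finally show ?thesis .
  qed
  have sBc: "summable Bc"
  proof (rule summable_fact_bound[where K="d * M\<^sup>2" and L="8 * d * Q\<^sup>2"])
    fix n
    have sn: "real (Suc n) \<le> 2 ^ n"
    proof -
      have "Suc n \<le> 2 ^ n" using less_exp[of n] by (simp add: Suc_leI)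
      then show ?thesis by (metis of_nat_le_iff of_nat_numeral of_nat_power)
    qed
    have "\<bar>Bc n\<bar> = real (Suc n) * (d * d ^ n * K n)" unfolding Bc_def using K0 d0 by simp
    also have "\<dots> \<le> 2 ^ n * (d * d ^ n * K n)" using sn K0 d0 by (intro mult_right_mono) auto
    also have "\<dots> = d * M\<^sup>2 * ((8 * d * Q\<^sup>2) ^ n / fact n)"
    proof -
      have e8: "(2::real) ^ n * 4 ^ n = 8 ^ n" by (simp add: power_mult_distrib[symmetric])
      have "(8 * d * Q\<^sup>2) ^ n = 2 ^ n * 4 ^ n * d ^ n * (Q\<^sup>2) ^ n" unfolding e8 by (simp add: power_mult_distrib)
      then show ?thesis unfolding K_def using e8 by (simp add: power_mult_distrib)
    qed
    finally show "\<bar>Bc n\<bar> \<le> d * M\<^sup>2 * ((8 * d * Q\<^sup>2) ^ n / fact n)" .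
  qed
  have ab: "0 \<in> {0..T}" "T \<in> {0..T}" using T by auto
  have Phi: "sk x 0 s y 0 t * sk x s T y t T * (g s \<bullet> y t) = (\<Sum>n. cc n s t)"
    if s: "s \<in> {0..T}" and t: "t \<in> {0..T}" for s t
  proof -
    define K1 where "K1 p = (\<Sum>u\<in>{u::'d list. length u = p}. sg x 0 s u * sg y 0 t u)" for p
    define L1 where "L1 q = (\<Sum>v\<in>{v::'d list. length v = q}. sg x s T v * sg y t T v)" for q
    have bK: "\<bar>norm (K1 p)\<bar> \<le> 1 * ((d * Q\<^sup>2) ^ p / fact p)" for p
    proof -
      have "\<bar>K1 p\<bar> \<le> d ^ p * ((Q ^ p / fact p) * (Q ^ p / fact p))" unfolding K1_def d_def
      proof (rule sum_W_bound)
        fix u :: "'d list" assume u: "length u = p"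
        show "\<bar>sg x 0 s u * sg y 0 t u\<bar> \<le> (Q ^ p / fact p) * (Q ^ p / fact p)"
          unfolding abs_mult using sgb[OF x ab(1) s, of u] sgb[OF y ab(1) t, of u] u Q0 by (intro mult_mono) auto
      qed
      also have "\<dots> \<le> d ^ p * ((Q\<^sup>2) ^ p / fact p)" using prodfact[OF Q0] d0 by (intro mult_left_mono) auto
      finally show ?thesis by (simp add: power_mult_distrib)
    qed
    have bL: "\<bar>norm (L1 p)\<bar> \<le> 1 * ((d * Q\<^sup>2) ^ p / fact p)" for p
    proof -
      have "\<bar>L1 p\<bar> \<le> d ^ p * ((Q ^ p / fact p) * (Q ^ p / fact p))" unfolding L1_def d_def
      proof (rule sum_W_bound)
        fix u :: "'d list" assume u: "length u = p"
        show "\<bar>sg x s T u * sg y t T u\<bar> \<le> (Q ^ p / fact p) * (Q ^ p / fact p)"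
          unfolding abs_mult using sgb[OF x s ab(2), of u] sgb[OF y t ab(2), of u] u Q0 by (intro mult_mono) auto
      qed
      also have "\<dots> \<le> d ^ p * ((Q\<^sup>2) ^ p / fact p)" using prodfact[OF Q0] d0 by (intro mult_left_mono) auto
      finally show ?thesis by (simp add: power_mult_distrib)
    qed
    have sK: "summable (\<lambda>p. norm (K1 p))" by (rule summable_fact_bound[OF bK])
    have sL: "summable (\<lambda>p. norm (L1 p))" by (rule summable_fact_bound[OF bL])
    have e1: "sk x 0 s y 0 t = suminf K1" unfolding sk_def K1_def ..
    have e2: "sk x s T y t T = suminf L1" unfolding sk_def L1_def ..
    have CP: "suminf K1 * suminf L1 = (\<Sum>n. \<Sum>p\<le>n. K1 p * L1 (n - p))" by (rule Cauchy_product[OF sK sL])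
    have sCP: "summable (\<lambda>n. \<Sum>p\<le>n. K1 p * L1 (n - p))" by (rule summable_Cauchy_product[OF sK sL])
    have G: "g s \<bullet> y t = (\<Sum>i\<in>UNIV. g s $ i * y t $ i)" by (simp add: inner_vec_def)
    have cn: "(\<Sum>p\<le>n. K1 p * L1 (n - p)) * (g s \<bullet> y t) = cc n s t" for n
      unfolding cc_def sum_distrib_right
    proof (rule sum.cong[OF refl])
      fix p
      show "K1 p * L1 (n - p) * (g s \<bullet> y t) = (\<Sum>u\<in>{u::'d list. length u = p}. \<Sum>v\<in>{v::'d list. length v = n - p}.
          \<Sum>i\<in>UNIV. \<alpha> u i v s * \<beta> u i v t)"
        unfolding K1_def L1_def G triple_prod by (intro sum.cong refl) (simp add: \<alpha>_def \<beta>_def mult_ac)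
    qed
    have "sk x 0 s y 0 t * sk x s T y t T * (g s \<bullet> y t) = (\<Sum>n. \<Sum>p\<le>n. K1 p * L1 (n - p)) * (g s \<bullet> y t)"
      unfolding e1 e2 CP ..
    also have "\<dots> = (\<Sum>n. (\<Sum>p\<le>n. K1 p * L1 (n - p)) * (g s \<bullet> y t))" by (rule suminf_mult2[OF sCP])
    also have "\<dots> = (\<Sum>n. cc n s t)" unfolding cn ..
    finally show ?thesis .
  qed
  have ccint: "(\<lambda>s. cc n s t) integrable_on {0..T}" for n t
    unfolding cc_def by (intro integrable_sum finite_W finite_atMost finite_class.finite_UNIV \<alpha>int)
  have In_eq: "integral {0..T} (\<lambda>s. cc n s t) = (\<Sum>p\<le>n. \<Sum>u\<in>{u::'d list. length u = p}. \<Sum>v\<in>{v::'d list. length v = n - p}.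
      \<Sum>i\<in>UNIV. A u i v * \<beta> u i v t)" for n t
    unfolding cc_def A_def by (simp add: integral_sum \<alpha>int integrable_sum finite_W finite_class.finite_UNIV)
  define In where "In n t = integral {0..T} (\<lambda>s. cc n s t)" for n t
  have Inint: "In n integrable_on {0..T}" for n
    unfolding In_def In_eq by (intro integrable_sum finite_W finite_atMost finite_class.finite_UNIV \<beta>int')
  have \<beta>val: "integral {0..T} (\<beta> u i v) = sg y 0 T (u @ i # v)" for u i v
    unfolding \<beta>_def by (rule chen[OF y, symmetric])
  have Inval: "integral {0..T} (In n) = (\<Sum>p\<le>n. \<Sum>u\<in>{u::'d list. length u = p}. \<Sum>v\<in>{v::'d list. length v = n - p}.
      \<Sum>i\<in>UNIV. A u i v * sg y 0 T (u @ i # v))" for n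
    unfolding In_def In_eq by (simp add: integral_sum \<beta>int' integrable_sum finite_W finite_class.finite_UNIV \<beta>val)
  have Inb: "\<bar>In n t\<bar> \<le> Bc n * T" if t: "t \<in> {0..T}" for n t
    unfolding In_def by (rule int_T_bound[OF ccint ab ccb[OF _ t] Bc0])
  have inner: "(\<lambda>n. In n t) sums integral {0..T} (\<lambda>s. sk x 0 s y 0 t * sk x s T y t T * (g s \<bullet> y t))"
    if t: "t \<in> {0..T}" for t
  proof -
    have "(\<lambda>n. integral {0..T} (\<lambda>s. cc n s t)) sums integral {0..T} (\<lambda>s. \<Sum>n. cc n s t)"
      by (rule int_suminf[where B=Bc]) (use ccint ccb t sBc in auto)
    moreover have "integral {0..T} (\<lambda>s. \<Sum>n. cc n s t) = integral {0..T} (\<lambda>s. sk x 0 s y 0 t * sk x s T y t T * (g s \<bullet> y t))"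
      by (rule integral_cong) (use Phi t in auto)
    ultimately show ?thesis unfolding In_def by simp
  qed
  have outer: "(\<lambda>n. integral {0..T} (In n)) sums integral {0..T} (\<lambda>t. \<Sum>n. In n t)"
    by (rule int_suminf[where B="\<lambda>n. Bc n * T"]) (use Inint Inb summable_mult2[OF sBc] in auto)
  have oeq: "integral {0..T} (\<lambda>t. \<Sum>n. In n t) = integral {0..T} (\<lambda>t. integral {0..T} (\<lambda>s. sk x 0 s y 0 t * sk x s T y t T * (g s \<bullet> y t)))"
    by (rule integral_cong) (use inner in \<open>auto intro: sums_unique[symmetric]\<close>)
  define D where "D j = (\<Sum>w\<in>{w::'d list. length w = j}. Dw x g 0 T w * sg y 0 T w)" for j
  have Dsuc: "D (Suc n) = integral {0..T} (In n)" for n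
  proof -
    have "D (Suc n) = (\<Sum>w\<in>{w::'d list. length w = Suc n}. \<Sum>k<Suc n.
        A (take k w) (w ! k) (drop (Suc k) w) * sg y 0 T (take k w @ w ! k # drop (Suc k) w))"
      unfolding D_def
    proof (rule sum.cong[OF refl])
      fix w :: "'d list" assume w: "w \<in> {w. length w = Suc n}"
      have "Dw x g 0 T w * sg y 0 T w = (\<Sum>k<Suc n. Bt x g x 0 T w k * sg y 0 T w)"
      proof -
        have lw: "length w = Suc n" using w by simp
        show ?thesis unfolding Dw_def lw sum_distrib_right ..
      qed
      also have "\<dots> = (\<Sum>k<Suc n. A (take k w) (w ! k) (drop (Suc k) w) * sg y 0 T (take k w @ w ! k # drop (Suc k) w))"
      proof (rule sum.cong[OF refl])
        fix k assume "k \<in> {..<Suc n}"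
        then have "k < length w" using w by auto
        then show "Bt x g x 0 T w k * sg y 0 T w = A (take k w) (w ! k) (drop (Suc k) w) * sg y 0 T (take k w @ w ! k # drop (Suc k) w)"
          unfolding Bt_def A_def \<alpha>_def using id_take_nth_drop[of k w] by simp
      qed
      finally show "Dw x g 0 T w * sg y 0 T w = (\<Sum>k<Suc n.
        A (take k w) (w ! k) (drop (Suc k) w) * sg y 0 T (take k w @ w ! k # drop (Suc k) w))" .
    qed
    also have "\<dots> = (\<Sum>p\<le>n. \<Sum>u\<in>{u::'d list. length u = p}. \<Sum>v\<in>{v::'d list. length v = n - p}.
      \<Sum>i\<in>UNIV. A u i v * sg y 0 T (u @ i # v))"
      using reindex_split[of "\<lambda>u i v. A u i v * sg y 0 T (u @ i # v)" n] by (simp only:)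
    also have "\<dots> = integral {0..T} (In n)" by (rule Inval[symmetric])
    finally show ?thesis .
  qed
  have D0: "D 0 = 0" unfolding D_def Dw_def by simp
  have "(\<lambda>n. D (Suc n)) sums integral {0..T} (\<lambda>t. integral {0..T} (\<lambda>s. sk x 0 s y 0 t * sk x s T y t T * (g s \<bullet> y t)))"
    using outer unfolding Dsuc oeq .
  then have "D sums (integral {0..T} (\<lambda>t. integral {0..T} (\<lambda>s. sk x 0 s y 0 t * sk x s T y t T * (g s \<bullet> y t))) + D 0)"
    by (simp only: sums_Suc_iff)
  then have "D sums integral {0..T} (\<lambda>t. integral {0..T} (\<lambda>s. sk x 0 s y 0 t * sk x s T y t T * (g s \<bullet> y t)))"
    unfolding D0 by simp
  then show ?thesis unfolding D_def .
qed



lemma find_k: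
  fixes p :: "real list"
  assumes p: "p \<noteq> []" "hd p = 0" "last p = T" "sorted_wrt (<) p"
    and t: "0 < t" "t < T" "t \<notin> set p"
  obtains k where "k < length p - 1" "p ! k < t" "t < p ! Suc k"
proof -
  define K where "K = {k. k < length p \<and> p ! k < t}"
  have p0: "p ! 0 = 0" using p by (simp add: hd_conv_nth)
  have pl: "p ! (length p - 1) = T" using p by (simp add: last_conv_nth)
  have finK: "finite K" unfolding K_def by simp
  have K0: "0 \<in> K" unfolding K_def using p p0 t by auto
  define k where "k = Max K"
  have kK: "k \<in> K" unfolding k_def using finK K0 by (intro Max_in) auto
  then have k1: "k < length p" "p ! k < t" unfolding K_def by auto
  have k2: "k < length p - 1"
  proof (rule ccontr)
    assume "\<not> k < length p - 1"
    then have "k = length p - 1" using k1 by auto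
    then show False using k1 pl t by auto
  qed
  have k3: "t < p ! Suc k"
  proof (rule ccontr)
    assume "\<not> t < p ! Suc k"
    moreover have "p ! Suc k \<noteq> t" using t(3) nth_mem[of "Suc k" p] k2 by auto
    ultimately have "Suc k \<in> K" unfolding K_def using k2 by auto
    then have "Suc k \<le> k" unfolding k_def using finK by (intro Max_ge) auto
    then show False by simp
  qed
  show ?thesis using that k2 k1 k3 by blast
qed

lemma good_mono: "good M f \<Longrightarrow> M \<le> M' \<Longrightarrow> good M' f"
  unfolding good_def by (meson order_trans)

lemma pw_deriv:
  fixes Z :: "real \<Rightarrow> real^'d"
  assumes "pw_linear T Z"
  obtains S f M where "finite S" "good M f" "\<And>t. t \<in> {0<..<T} - S \<Longrightarrow> (Z has_vector_derivative f t) (at t)"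
proof -
  obtain p where p: "p \<noteq> []" "hd p = 0" "last p = T" "sorted_wrt (<) p"
    and lin: "\<forall>k < length p - 1. \<exists>a b. \<forall>t\<in>{p!k..p!(Suc k)}. Z t = a + t *\<^sub>R b"
    using assms unfolding pw_linear_def by blast
  have "\<forall>k. \<exists>ab. k < length p - 1 \<longrightarrow> (\<forall>t\<in>{p!k..p!(Suc k)}. Z t = fst ab + t *\<^sub>R snd ab)"
    using lin by fastforce
  from choice[OF this] obtain AB where AB': "\<forall>k. k < length p - 1 \<longrightarrow> (\<forall>t\<in>{p!k..p!(Suc k)}. Z t = fst (AB k) + t *\<^sub>R snd (AB k))"
    by blast
  then have AB: "\<And>k t. k < length p - 1 \<Longrightarrow> t \<in> {p!k..p!(Suc k)} \<Longrightarrow> Z t = fst (AB k) + t *\<^sub>R snd (AB k)"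
    by blast
  define n where "n = length p - 1"
  define B where "B k = snd (AB k)" for k
  define f where "f t = (\<Sum>k<n. indicator {p!k<..<p!Suc k} t *\<^sub>R B k)" for t
  define M where "M = (\<Sum>k<n. norm (B k))"
  have fi: "f t $ i = (\<Sum>k<n. indicator {p!k<..<p!Suc k} t * B k $ i)" for t i
    unfolding f_def by (simp add: sum_component)
  have good: "good M f"
    unfolding good_def
  proof (intro conjI allI)
    fix i
    show "(\<lambda>t. f t $ i) \<in> borel_measurable borel" unfolding fi by measurable
    fix t
    have "\<bar>f t $ i\<bar> \<le> (\<Sum>k<n. \<bar>indicator {p!k<..<p!Suc k} t * B k $ i\<bar>)" unfolding fi by (rule sum_abs)
    also have "\<dots> \<le> (\<Sum>k<n. norm (B k))"
    proof (rule sum_mono)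
      fix k
      have "\<bar>indicator {p!k<..<p!Suc k} t * B k $ i\<bar> \<le> 1 * \<bar>B k $ i\<bar>"
        unfolding abs_mult by (intro mult_right_mono) (auto simp: indicator_def)
      also have "\<dots> \<le> norm (B k)" using component_le_norm_cart[of "B k" i] by simp
      finally show "\<bar>indicator {p!k<..<p!Suc k} t * B k $ i\<bar> \<le> norm (B k)" .
    qed
    finally show "\<bar>f t $ i\<bar> \<le> M" unfolding M_def .
  qed
  have mono: "p ! i \<le> p ! j" if "i \<le> j" "j < length p" for i j
    using sorted_wrt_nth_less[OF p(4), of i j] that by (cases "i = j") auto
  have der: "(Z has_vector_derivative f t) (at t)" if t: "t \<in> {0<..<T} - set p" for t
  proof -
    obtain k where k: "k < length p - 1" "p ! k < t" "t < p ! Suc k"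
      using find_k[OF p, of t] t by auto
    have fk: "f t = B k"
    proof -
      have "f t = (\<Sum>j<n. if j = k then B k else 0)"
        unfolding f_def
      proof (rule sum.cong[OF refl])
        fix j assume j: "j \<in> {..<n}"
        show "indicator {p!j<..<p!Suc j} t *\<^sub>R B j = (if j = k then B k else 0)"
        proof (cases "j = k")
          case True then show ?thesis using k by simp
        next
          case False
          show ?thesis
          proof (cases "j < k")
            case True
            then have "p ! Suc j \<le> p ! k" using k by (intro mono) auto
            then show ?thesis using False k by (simp add: indicator_def)
          next
            case False': False
            then have "p ! Suc k \<le> p ! j" using k j \<open>j \<noteq> k\<close> unfolding n_def by (intro mono) auto
            then show ?thesis using False k by (simp add: indicator_def)
          qed
        qed
      qed
      also have "\<dots> = B k" using k unfolding n_def by simp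
      finally show ?thesis .
    qed
    have "((\<lambda>s. fst (AB k) + s *\<^sub>R B k) has_vector_derivative B k) (at t)"
      by (auto intro!: derivative_eq_intros)
    then have "(Z has_vector_derivative B k) (at t)"
    proof (rule has_vector_derivative_transform_within_open[where S="{p!k<..<p!Suc k}"])
      show "open {p!k<..<p!Suc k}" by simp
      show "t \<in> {p!k<..<p!Suc k}" using k by simp
      fix s assume "s \<in> {p!k<..<p!Suc k}"
      then show "fst (AB k) + s *\<^sub>R B k = Z s" using AB[OF k(1), of s] unfolding B_def by simp
    qed
    then show ?thesis unfolding fk .
  qed
  show ?thesis by (rule that[of "set p" M f]) (use good der in auto)
qed

lemma sg_spike:
  fixes F f :: "real \<Rightarrow> real^'d"
  assumes S: "finite S" and eq: "\<And>t. t \<in> {0..T} - S \<Longrightarrow> F t = f t"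
  shows "a \<in> {0..T} \<Longrightarrow> b \<in> {0..T} \<Longrightarrow> sg F a b w = sg f a b w"
proof (induction w arbitrary: a)
  case Nil
  then show ?case by simp
next
  case (Cons i w)
  show ?case
    unfolding sg.simps
  proof (rule integral_spike[where S=S])
    show "negligible S" using S by auto
    fix s assume s: "s \<in> {a..b} - S"
    then have s': "s \<in> {0..T}" using Cons.prems by auto
    show "f s $ i * sg f s b w = F s $ i * sg F s b w"
      using eq[of s] s s' Cons.IH[OF s' Cons.prems(2)] by auto
  qed
qed



lemma pw_deriv_ex:
  fixes Z :: "real \<Rightarrow> real^'d"
  assumes "pw_linear T Z"
  shows "\<exists>S f M. finite S \<and> good M f \<and> (\<forall>t\<in>{0<..<T} - S. (Z has_vector_derivative f t) (at t))"
proof (rule pw_deriv[OF assms])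
  fix S f M
  assume a: "finite S" "good M f" "\<And>t. t \<in> {0<..<T} - S \<Longrightarrow> (Z has_vector_derivative f t) (at t)"
  show ?thesis using a by blast
qed

lemma sum_W_rev:
  fixes F :: "'d::finite list \<Rightarrow> real"
  shows "(\<Sum>w\<in>{w::'d list. length w = j}. F (rev w)) = (\<Sum>w\<in>{w::'d list. length w = j}. F w)"
  by (rule sum.reindex_bij_witness[where i=rev and j=rev]) auto

lemma sk_rev:
  fixes f f' :: "real \<Rightarrow> real^'d"
  assumes f: "good M f" and f': "good M f'"
  shows "sk (\<lambda>r. - f (T - r)) 0 (T - s) (\<lambda>r. - f' (T - r)) 0 (T - t) = sk f s T f' t T"
  unfolding sk_def
proof (rule arg_cong[where f=suminf], rule ext)
  fix j
  have "(\<Sum>w\<in>{w::'d list. length w = j}. sg (\<lambda>r. - f (T - r)) 0 (T - s) w * sg (\<lambda>r. - f' (T - r)) 0 (T - t) w)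
      = (\<Sum>w\<in>{w::'d list. length w = j}. sg f s T (rev w) * sg f' t T (rev w))"
  proof (rule sum.cong[OF refl])
    fix w :: "'d list" assume "w \<in> {w. length w = j}"
    have "((-1::real) ^ length w) * (-1) ^ length w = 1"
      by (simp add: power_mult_distrib[symmetric])
    then show "sg (\<lambda>r. - f (T - r)) 0 (T - s) w * sg (\<lambda>r. - f' (T - r)) 0 (T - t) w = sg f s T (rev w) * sg f' t T (rev w)"
      unfolding sg_rev[OF f] sg_rev[OF f'] by (simp add: algebra_simps)
  qed
  also have "\<dots> = (\<Sum>w\<in>{w::'d list. length w = j}. sg f s T w * sg f' t T w)"
    by (rule sum_W_rev[where F="\<lambda>w. sg f s T w * sg f' t T w"])
  finally show "(\<Sum>w\<in>{w::'d list. length w = j}. sg (\<lambda>r. - f (T - r)) 0 (T - s) w * sg (\<lambda>r. - f' (T - r)) 0 (T - t) w)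
      = (\<Sum>w\<in>{w::'d list. length w = j}. sg f s T w * sg f' t T w)" .
qed

lemma generic_main:
  fixes x g y :: "real \<Rightarrow> real^'d"
  assumes x: "good M x" and g: "good M g" and y: "good M y" and T: "0 \<le> T"
  shows "((\<lambda>e. sk (\<lambda>s. x s + e *\<^sub>R g s) 0 T y 0 T) has_real_derivative
           integral {0..T} (\<lambda>t. integral {0..T} (\<lambda>s. sk x 0 s y 0 t * sk x s T y t T * (g s \<bullet> y t)))) (at 0)"
  using deriv_sk[OF x g y T] sums_unique[OF double_integral[OF x g y T]] by simp

theorem theorem4p1:
  fixes T :: real and X Y \<gamma> :: "real \<Rightarrow> real^'d"
  assumes "T > 0"
    and "pw_linear T X" and "pw_linear T Y" and "pw_linear T \<gamma>"
  shows "((\<lambda>\<epsilon>. sigker (\<lambda>r. X r + \<epsilon> *\<^sub>R \<gamma> r) 0 T Y 0 T) has_real_derivative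
           integral {0..T} (\<lambda>t. integral {0..T} (\<lambda>s.
              sigker X 0 s Y 0 t
            * sigker (rev_path T X) 0 (T - s) (rev_path T Y) 0 (T - t)
            * (dot \<gamma> s \<bullet> dot Y t)))) (at 0)"
proof -
  have T0: "0 \<le> T" using assms(1) by simp
  obtain SX fX MX where SX: "finite SX" and gX: "good MX fX"
    and dX0: "\<forall>t\<in>{0<..<T} - SX. (X has_vector_derivative fX t) (at t)"
    using pw_deriv_ex[OF assms(2)] by blast
  obtain SY fY MY where SY: "finite SY" and gY: "good MY fY"
    and dY0: "\<forall>t\<in>{0<..<T} - SY. (Y has_vector_derivative fY t) (at t)"
    using pw_deriv_ex[OF assms(3)] by blast
  obtain SG fG MG where SG: "finite SG" and gG: "good MG fG"
    and dG0: "\<forall>t\<in>{0<..<T} - SG. (\<gamma> has_vector_derivative fG t) (at t)"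
    using pw_deriv_ex[OF assms(4)] by blast
  have dX: "\<And>t. t \<in> {0<..<T} - SX \<Longrightarrow> (X has_vector_derivative fX t) (at t)" using dX0 by blast
  have dY: "\<And>t. t \<in> {0<..<T} - SY \<Longrightarrow> (Y has_vector_derivative fY t) (at t)" using dY0 by blast
  have dG: "\<And>t. t \<in> {0<..<T} - SG \<Longrightarrow> (\<gamma> has_vector_derivative fG t) (at t)" using dG0 by blast
  define M where "M = max MX (max MY MG)"
  have gX': "good M fX" by (rule good_mono[OF gX]) (simp add: M_def)
  have gY': "good M fY" by (rule good_mono[OF gY]) (simp add: M_def)
  have gG': "good M fG" by (rule good_mono[OF gG]) (simp add: M_def)
  define E where "E = SX \<union> SY \<union> SG \<union> {0, T}"
  have finE: "finite E" unfolding E_def using SX SY SG by simp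
  define E' where "E' = E \<union> (\<lambda>r. T - r) ` E"
  have finE': "finite E'" unfolding E'_def using finE by simp
  have inE: "t \<in> {0<..<T} - SX" "t \<in> {0<..<T} - SY" "t \<in> {0<..<T} - SG" if "t \<in> {0..T} - E" for t
    using that unfolding E_def by auto
  have dotX: "dot X t = fX t" if "t \<in> {0..T} - E" for t
    unfolding dot_def by (rule vector_derivative_at[OF dX[OF inE(1)[OF that]]])
  have dotY: "dot Y t = fY t" if "t \<in> {0..T} - E" for t
    unfolding dot_def by (rule vector_derivative_at[OF dY[OF inE(2)[OF that]]])
  have dotG: "dot \<gamma> t = fG t" if "t \<in> {0..T} - E" for t
    unfolding dot_def by (rule vector_derivative_at[OF dG[OF inE(3)[OF that]]])
  have dotXe: "dot (\<lambda>r. X r + e *\<^sub>R \<gamma> r) t = fX t + e *\<^sub>R fG t" if "t \<in> {0..T} - E" for t e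
  proof -
    have "((\<lambda>r. e *\<^sub>R \<gamma> r) has_vector_derivative e *\<^sub>R fG t) (at t)"
      by (rule bounded_linear.has_vector_derivative[OF bounded_linear_scaleR_right dG[OF inE(3)[OF that]]])
    then have "((\<lambda>r. X r + e *\<^sub>R \<gamma> r) has_vector_derivative fX t + e *\<^sub>R fG t) (at t)"
      by (rule has_vector_derivative_add[OF dX[OF inE(1)[OF that]]])
    then show ?thesis unfolding dot_def by (rule vector_derivative_at)
  qed
  have dotR: "dot (rev_path T Z) r = - f (T - r)"
    if r: "r \<in> {0..T} - E'" and dZ: "\<And>t. t \<in> {0..T} - E \<Longrightarrow> (Z has_vector_derivative f t) (at t)"
    for Z f :: "real \<Rightarrow> real^'d" and r
  proof -
    have Tr: "T - r \<in> {0..T} - E"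
    proof -
      have "T - r \<notin> E"
      proof
        assume "T - r \<in> E"
        then have "T - (T - r) \<in> (\<lambda>r. T - r) ` E" by blast
        then show False using r unfolding E'_def by simp
      qed
      then show ?thesis using r by auto
    qed
    have "((\<lambda>r. T - r) has_real_derivative (-1)) (at r)"
      by (auto intro!: derivative_eq_intros)
    then have d1: "((\<lambda>r. T - r) has_vector_derivative (-1)) (at r)"
      unfolding has_real_derivative_iff_has_vector_derivative .
    have "((Z \<circ> (\<lambda>r. T - r)) has_vector_derivative ((-1) *\<^sub>R f (T - r))) (at r)"
      by (rule vector_diff_chain_at[OF d1]) (use dZ[OF Tr] in simp)
    moreover have "rev_path T Z = Z \<circ> (\<lambda>r. T - r)" unfolding rev_path_def by (simp add: o_def)
    ultimately show ?thesis unfolding dot_def by (simp add: vector_derivative_at)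
  qed
  have dXE: "(X has_vector_derivative fX t) (at t)" if "t \<in> {0..T} - E" for t using dX[OF inE(1)[OF that]] .
  have dYE: "(Y has_vector_derivative fY t) (at t)" if "t \<in> {0..T} - E" for t using dY[OF inE(2)[OF that]] .
  have sgXe: "sg (dot (\<lambda>r. X r + e *\<^sub>R \<gamma> r)) a b w = sg (\<lambda>s. fX s + e *\<^sub>R fG s) a b w"
    if "a \<in> {0..T}" "b \<in> {0..T}" for a b w e
    by (rule sg_spike[OF finE dotXe that])
  have sgX: "sg (dot X) a b w = sg fX a b w" if "a \<in> {0..T}" "b \<in> {0..T}" for a b w
    by (rule sg_spike[OF finE dotX that])
  have sgY: "sg (dot Y) a b w = sg fY a b w" if "a \<in> {0..T}" "b \<in> {0..T}" for a b w
    by (rule sg_spike[OF finE dotY that])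
  have sgRX: "sg (dot (rev_path T X)) a b w = sg (\<lambda>r. - fX (T - r)) a b w" if "a \<in> {0..T}" "b \<in> {0..T}" for a b w
    by (rule sg_spike[OF finE' _ that]) (rule dotR[OF _ dXE])
  have sgRY: "sg (dot (rev_path T Y)) a b w = sg (\<lambda>r. - fY (T - r)) a b w" if "a \<in> {0..T}" "b \<in> {0..T}" for a b w
    by (rule sg_spike[OF finE' _ that]) (rule dotR[OF _ dYE])
  have ab: "0 \<in> {0..T}" "T \<in> {0..T}" using T0 by auto
  have L: "(\<lambda>\<epsilon>. sigker (\<lambda>r. X r + \<epsilon> *\<^sub>R \<gamma> r) 0 T Y 0 T) = (\<lambda>e. sk (\<lambda>s. fX s + e *\<^sub>R fG s) 0 T fY 0 T)"
    unfolding sigker_sk sk_def by (intro ext) (simp add: sgXe[OF ab] sgY[OF ab])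
  have R1: "sigker X 0 s Y 0 t = sk fX 0 s fY 0 t" if "s \<in> {0..T}" "t \<in> {0..T}" for s t
    unfolding sigker_sk sk_def using that ab by (simp add: sgX sgY)
  have R2: "sigker (rev_path T X) 0 (T - s) (rev_path T Y) 0 (T - t) = sk fX s T fY t T"
    if "s \<in> {0..T}" "t \<in> {0..T}" for s t
  proof -
    have st: "T - s \<in> {0..T}" "T - t \<in> {0..T}" using that by auto
    have "sigker (rev_path T X) 0 (T - s) (rev_path T Y) 0 (T - t)
        = sk (\<lambda>r. - fX (T - r)) 0 (T - s) (\<lambda>r. - fY (T - r)) 0 (T - t)"
      unfolding sigker_sk sk_def using st ab by (simp add: sgRX sgRY)
    also have "\<dots> = sk fX s T fY t T" by (rule sk_rev[OF gX' gY'])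
    finally show ?thesis .
  qed
  have R: "integral {0..T} (\<lambda>t. integral {0..T} (\<lambda>s.
              sigker X 0 s Y 0 t
            * sigker (rev_path T X) 0 (T - s) (rev_path T Y) 0 (T - t)
            * (dot \<gamma> s \<bullet> dot Y t)))
      = integral {0..T} (\<lambda>t. integral {0..T} (\<lambda>s. sk fX 0 s fY 0 t * sk fX s T fY t T * (fG s \<bullet> fY t)))"
  proof (rule integral_spike[where S=E, symmetric])
    show "negligible E" using finE by auto
    fix t assume t: "t \<in> {0..T} - E"
    show "integral {0..T} (\<lambda>s. sigker X 0 s Y 0 t * sigker (rev_path T X) 0 (T - s) (rev_path T Y) 0 (T - t) * (dot \<gamma> s \<bullet> dot Y t))
        = integral {0..T} (\<lambda>s. sk fX 0 s fY 0 t * sk fX s T fY t T * (fG s \<bullet> fY t))"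
    proof (rule integral_spike[where S=E, symmetric])
      show "negligible E" using finE by auto
      fix s assume s: "s \<in> {0..T} - E"
      show "sigker X 0 s Y 0 t * sigker (rev_path T X) 0 (T - s) (rev_path T Y) 0 (T - t) * (dot \<gamma> s \<bullet> dot Y t)
          = sk fX 0 s fY 0 t * sk fX s T fY t T * (fG s \<bullet> fY t)"
        using R1[of s t] R2[of s t] dotG[OF s] dotY[OF t] s t by simp
    qed
  qed
  show ?thesis unfolding L R by (rule generic_main[OF gX' gG' gY' T0])
qed

end
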